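(* Let $q\in K$ with $|q-1|<1$. Let $g(T)\in\mathcal{E}_K$ with $|g(T)|_1\le1$, and consider the equation $\Delta_q-g(T)$ (i.e. $\Delta_q(y)=g\,y$, equivalently $d_q(y)=g_{[1]}y$ with $g_{[1]}=g/T$). Then $\mathrm{Ray}(\Delta_q-g(T),1)>\omega_q$ if and only if $|g_{[s]}(T)|_1<1$ for some $s\ge1$.
   Context: $K$ is a field of characteristic $0$, complete for a discrete non-archimedean absolute value, residue field of characteristic $p>0$. $\mathcal{E}_K$ is the ring of Laurent series $\sum a_iT^i$ over $K$ with $\sup|a_i|<\infty$ and $|a_i|\to0$ as $i\to-\infty$, Gauss norm $|\cdot|_1=\sup|a_i|$. $\sigma_q(f)(T)=f(qT)$, $d_q=\frac{\sigma_q-1}{(q-1)T}$, $\Delta_q=\frac{\sigma_q-1}{q-1}$, $[n]_q!=\prod_{i=1}^n\frac{q^i-1}{q-1}$; for $|q-1|<1$ the limit $\omega_q:=\lim_n|[n]_q!|^{1/n}$ exists and is $<1$. Set $g_{[0]}=1$, $g_{[1]}=g/T$, $g_{[s+1]}=d_q(g_{[s]})+\sigma_q(g_{[s]})g_{[1]}$, and $\mathrm{Ray}(\Delta_q-g,1)=\min\big(1,\liminf_s(|g_{[s]}|_1/|[s]_q!|)^{-1/s}\big)$. *)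

theory Defs
  imports Complex_Main "HOL-Library.Extended_Real" "HOL-Computational_Algebra.Primes"
begin

definition nonarch_abs :: "('a::field \<Rightarrow> real) \<Rightarrow> bool" where
  "nonarch_abs av \<longleftrightarrow>
     (\<forall>x. av x \<ge> 0) \<and> (\<forall>x. av x = 0 \<longleftrightarrow> x = 0) \<and>
     (\<forall>x y. av (x * y) = av x * av y) \<and>
     (\<forall>x y. av (x + y) \<le> max (av x) (av y))"

definition discrete_abs :: "('a::field \<Rightarrow> real) \<Rightarrow> bool" where
  "discrete_abs av \<longleftrightarrow>
     (\<exists>\<pi>. 0 < av \<pi> \<and> av \<pi> < 1 \<and> (\<forall>x. x \<noteq> 0 \<longrightarrow> (\<exists>k::int. av x = av \<pi> powi k)))"

definition complete_abs :: "('a::field \<Rightarrow> real) \<Rightarrow> bool" where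
  "complete_abs av \<longleftrightarrow>
     (\<forall>X::nat \<Rightarrow> 'a. (\<forall>e>0. \<exists>N. \<forall>m\<ge>N. \<forall>n\<ge>N. av (X m - X n) < e)
        \<longrightarrow> (\<exists>L. (\<lambda>n. av (X n - L)) \<longlonglongrightarrow> 0))"

text \<open>K is complete for a discrete non-archimedean absolute value whose residue field
  has characteristic p > 0 (p prime and |p| < 1). Characteristic 0 of K is the type class.\<close>
definition cdvf :: "('a::field_char_0 \<Rightarrow> real) \<Rightarrow> nat \<Rightarrow> bool" where
  "cdvf av p \<longleftrightarrow> nonarch_abs av \<and> discrete_abs av \<and> complete_abs av \<and>
                  prime p \<and> av (of_nat p) < 1"

definition in_EK :: "('a::field \<Rightarrow> real) \<Rightarrow> (int \<Rightarrow> 'a) \<Rightarrow> bool" where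
  "in_EK av f \<longleftrightarrow> bdd_above (range (\<lambda>i. av (f i))) \<and>
                   (\<lambda>n::nat. av (f (- int n))) \<longlonglongrightarrow> 0"

definition gauss_norm :: "('a::field \<Rightarrow> real) \<Rightarrow> (int \<Rightarrow> 'a) \<Rightarrow> real" where
  "gauss_norm av f = (SUP i. av (f i))"

definition av_lim :: "('a::field \<Rightarrow> real) \<Rightarrow> (nat \<Rightarrow> 'a) \<Rightarrow> 'a" where
  "av_lim av S = (THE L. (\<lambda>N. av (S N - L)) \<longlonglongrightarrow> 0)"

definition ls_mult :: "('a::field \<Rightarrow> real) \<Rightarrow> (int \<Rightarrow> 'a) \<Rightarrow> (int \<Rightarrow> 'a) \<Rightarrow> (int \<Rightarrow> 'a)" where
  "ls_mult av a b = (\<lambda>n. av_lim av (\<lambda>N::nat. \<Sum>i\<in>{- int N..int N}. a i * b (n - i)))"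

definition ls_add :: "(int \<Rightarrow> 'a::field) \<Rightarrow> (int \<Rightarrow> 'a) \<Rightarrow> (int \<Rightarrow> 'a)" where
  "ls_add a b = (\<lambda>i. a i + b i)"

definition ls_one :: "int \<Rightarrow> 'a::field" where
  "ls_one = (\<lambda>i. if i = 0 then 1 else 0)"

definition ls_divT :: "(int \<Rightarrow> 'a::field) \<Rightarrow> (int \<Rightarrow> 'a)" where
  "ls_divT f = (\<lambda>i. f (i + 1))"

text \<open>sigma_q(f)(T) = f(qT)\<close>
definition sigma_q :: "'a::field \<Rightarrow> (int \<Rightarrow> 'a) \<Rightarrow> (int \<Rightarrow> 'a)" where
  "sigma_q q f = (\<lambda>i. q powi i * f i)"

definition d_q :: "'a::field \<Rightarrow> (int \<Rightarrow> 'a) \<Rightarrow> (int \<Rightarrow> 'a)" where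
  "d_q q f = ls_divT (\<lambda>i. (sigma_q q f i - f i) / (q - 1))"

text \<open>g_[0] = 1, g_[s+1] = d_q(g_[s]) + sigma_q(g_[s]) g_[1], with g_[1] = g/T
  (the case s = 0 of the recursion gives exactly g_[1] = g/T).\<close>
primrec g_br :: "('a::field \<Rightarrow> real) \<Rightarrow> 'a \<Rightarrow> (int \<Rightarrow> 'a) \<Rightarrow> nat \<Rightarrow> (int \<Rightarrow> 'a)" where
  "g_br av q g 0 = ls_one"
| "g_br av q g (Suc s) =
     ls_add (d_q q (g_br av q g s)) (ls_mult av (sigma_q q (g_br av q g s)) (ls_divT g))"

definition q_int :: "'a::field \<Rightarrow> nat \<Rightarrow> 'a" where
  "q_int q n = (q ^ n - 1) / (q - 1)"

definition q_fact :: "'a::field \<Rightarrow> nat \<Rightarrow> 'a" where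
  "q_fact q n = (\<Prod>i=1..n. q_int q i)"

definition omega_q :: "('a::field \<Rightarrow> real) \<Rightarrow> 'a \<Rightarrow> real" where
  "omega_q av q = lim (\<lambda>n. av (q_fact q n) powr (1 / real n))"

definition Ray :: "('a::field \<Rightarrow> real) \<Rightarrow> 'a \<Rightarrow> (int \<Rightarrow> 'a) \<Rightarrow> ereal" where
  "Ray av q g = min 1 (liminf (\<lambda>s. if gauss_norm av (g_br av q g s) = 0 then \<infinity>
        else ereal ((gauss_norm av (g_br av q g s) / av (q_fact q s)) powr (- 1 / real s))))"

end

theory Submission
  imports Defs
begin


locale NA =
  fixes av :: "'a::field_char_0 \<Rightarrow> real"
  assumes na: "nonarch_abs av"
begin

lemma av_nonneg[simp]: "0 \<le> av x" using na unfolding nonarch_abs_def by blast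
lemma av_eq0[simp]: "av x = 0 \<longleftrightarrow> x = 0" using na unfolding nonarch_abs_def by blast
lemma av_mult[simp]: "av (x * y) = av x * av y" using na unfolding nonarch_abs_def by blast
lemma av_add: "av (x + y) \<le> max (av x) (av y)" using na unfolding nonarch_abs_def by blast
lemma av_0[simp]: "av 0 = 0" by simp
lemma av_1[simp]: "av 1 = 1"
proof -
  have "av 1 = av 1 * av 1" using av_mult[of 1 1] by simp
  moreover have "av 1 \<noteq> 0" by simp
  ultimately show ?thesis by (metis mult_cancel_right1)
qed
lemma av_pos: "x \<noteq> 0 \<Longrightarrow> 0 < av x" using av_nonneg[of x] av_eq0[of x] by linarith
lemma av_minus1[simp]: "av (-1) = 1"
proof -
  have "av (-1) * av (-1) = 1" using av_mult[of "-1" "-1"] by simp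
  then show ?thesis using av_nonneg[of "-1"]
    by (metis abs_of_nonneg abs_power2 power2_eq_square real_sqrt_abs real_sqrt_one)
qed
lemma av_uminus[simp]: "av (- x) = av x"
  using av_mult[of "-1" x] by simp
lemma av_diff_commute: "av (x - y) = av (y - x)"
  using av_uminus[of "x - y"] by simp
lemma av_diff: "av (x - y) \<le> max (av x) (av y)"
  using av_add[of x "-y"] by simp
lemma av_power[simp]: "av (x ^ n) = av x ^ n" by (induction n) auto
lemma av_inverse[simp]: "av (inverse x) = inverse (av x)"
proof (cases "x = 0")
  case False
  have "av x * av (inverse x) = 1" using av_mult[of x "inverse x"] False by simp
  then show ?thesis by (simp add: inverse_unique)
qed simp
lemma av_divide[simp]: "av (x / y) = av x / av y"
  by (simp add: divide_inverse)
lemma av_power_int[simp]: "av (x powi i) = av x powi i"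
  by (cases "i \<ge> 0") (auto simp: power_int_def)

lemma av_add_le: "av x \<le> M \<Longrightarrow> av y \<le> M \<Longrightarrow> av (x + y) \<le> M"
  using av_add[of x y] by linarith
lemma av_diff_le: "av x \<le> M \<Longrightarrow> av y \<le> M \<Longrightarrow> av (x - y) \<le> M"
  using av_diff[of x y] by linarith
lemma av_add_strict: "av x < av y \<Longrightarrow> av (x + y) = av y"
proof -
  assume a: "av x < av y"
  have 1: "av (x + y) \<le> av y" using av_add[of x y] a by linarith
  have "av y = av ((x + y) - x)" by simp
  also have "\<dots> \<le> max (av (x+y)) (av x)" by (rule av_diff)
  finally have "av y \<le> av (x + y)" using a by linarith
  with 1 show ?thesis by linarith
qed

lemma av_sum_le:
  assumes "\<And>i. i \<in> S \<Longrightarrow> av (f i) \<le> M" "0 \<le> M"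
  shows "av (sum f S) \<le> M"
  using assms
proof (induction S rule: infinite_finite_induct)
  case (insert x F) then show ?case by (auto intro!: av_add_le)
qed auto

lemma av_of_nat_le: "av (of_nat n) \<le> 1"
  by (induction n) (auto intro!: av_add_le)
lemma av_of_int_le: "av (of_int n) \<le> 1"
proof (cases "n \<ge> 0")
  case True
  then have "of_int n = (of_nat (nat n) :: 'a)" by simp
  then show ?thesis using av_of_nat_le by metis
next
  case False
  then have "of_int n = - (of_nat (nat (-n)) :: 'a)" by simp
  then show ?thesis using av_of_nat_le by (metis av_uminus)
qed

lemma av_lim_unique:
  assumes "(\<lambda>N. av (S N - L)) \<longlonglongrightarrow> 0" "(\<lambda>N. av (S N - L')) \<longlonglongrightarrow> 0"
  shows "L = L'"
proof -
  have "(\<lambda>N. max (av (S N - L)) (av (S N - L'))) \<longlonglongrightarrow> max 0 0"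
    by (intro tendsto_max assms)
  moreover have "\<And>N. av (L - L') \<le> max (av (S N - L)) (av (S N - L'))"
  proof -
    fix N have "L - L' = (S N - L') - (S N - L)" by simp
    then show "av (L - L') \<le> max (av (S N - L)) (av (S N - L'))"
      using av_diff[of "S N - L'" "S N - L"] by auto
  qed
  ultimately have "av (L - L') \<le> 0"
    using LIMSEQ_le_const[of "\<lambda>N. max (av (S N - L)) (av (S N - L'))" "max 0 0" "av (L - L')"] by auto
  then show ?thesis using av_nonneg[of "L - L'"] by simp
qed

lemma av_lim_eq:
  assumes "(\<lambda>N. av (S N - L)) \<longlonglongrightarrow> 0"
  shows "av_lim av S = L"
  unfolding av_lim_def using assms av_lim_unique by blast

section \<open>Unconditional sums\<close>

definition usum_has :: "('b \<Rightarrow> 'a) \<Rightarrow> 'a \<Rightarrow> bool" where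
  "usum_has u s \<longleftrightarrow> (\<forall>e>0. \<exists>B. finite B \<and> (\<forall>C. finite C \<longrightarrow> B \<subseteq> C \<longrightarrow> av (s - sum u C) \<le> e))"

definition null :: "('b \<Rightarrow> 'a) \<Rightarrow> bool" where
  "null u \<longleftrightarrow> (\<forall>e>0. finite {i. e \<le> av (u i)})"

lemma sum_split_diff:
  fixes u :: "'b \<Rightarrow> 'a"
  assumes "finite C" "finite D"
  shows "sum u C - sum u D = sum u (C - D) - sum u (D - C)"
proof -
  have "sum u C = sum u (C - D) + sum u (C \<inter> D)"
    using assms by (metis Diff_Int_distrib Int_Diff Int_absorb Int_commute sum.Int_Diff add.commute)
  moreover have "sum u D = sum u (D - C) + sum u (C \<inter> D)"
    using assms by (metis Int_commute add.commute sum.Int_Diff)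
  ultimately show ?thesis by (simp only: add_diff_cancel_right)
qed

lemma sum_diff_small:
  assumes "finite C" "finite D" "\<And>i. i \<in> (C - D) \<union> (D - C) \<Longrightarrow> av (u i) \<le> e" "0 \<le> e"
  shows "av (sum u C - sum u D) \<le> e"
  using sum_split_diff[OF assms(1,2), of u] assms(3,4)
  by (auto intro!: av_diff_le av_sum_le)

lemma usum_unique: "usum_has u s \<Longrightarrow> usum_has u t \<Longrightarrow> s = t"
proof -
  assume s: "usum_has u s" and t: "usum_has u t"
  have "av (s - t) \<le> e" if "e > 0" for e
  proof -
    obtain B1 where B1: "finite B1" "\<And>C. finite C \<Longrightarrow> B1 \<subseteq> C \<Longrightarrow> av (s - sum u C) \<le> e"
      using s \<open>e>0\<close> unfolding usum_has_def by blast
    obtain B2 where B2: "finite B2" "\<And>C. finite C \<Longrightarrow> B2 \<subseteq> C \<Longrightarrow> av (t - sum u C) \<le> e"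
      using t \<open>e>0\<close> unfolding usum_has_def by blast
    have "s - t = (s - sum u (B1 \<union> B2)) - (t - sum u (B1 \<union> B2))" by simp
    then show ?thesis using B1(2)[of "B1 \<union> B2"] B2(2)[of "B1 \<union> B2"] B1(1) B2(1)
      by (metis av_diff_le finite_UnI sup.cobounded1 sup.cobounded2)
  qed
  then have "av (s - t) \<le> 0"
    using field_le_epsilon[of "av (s - t)" 0] by auto
  then show "s = t" using av_nonneg[of "s - t"] by simp
qed

lemma usum_finite:
  assumes "finite F" "\<And>i. i \<notin> F \<Longrightarrow> u i = 0"
  shows "usum_has u (sum u F)"
  unfolding usum_has_def
proof (intro allI impI exI[of _ F] conjI)
  fix e :: real and C assume "e > 0" "finite C" "F \<subseteq> C"
  then have "sum u C = sum u F" using assms by (intro sum.mono_neutral_right) auto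
  then show "av (sum u F - sum u C) \<le> e" using \<open>e>0\<close> by simp
qed (use assms in auto)

lemma usum_add: "usum_has u s \<Longrightarrow> usum_has v t \<Longrightarrow> usum_has (\<lambda>i. u i + v i) (s + t)"
  unfolding usum_has_def
proof (intro allI impI)
  fix e :: real assume s: "\<forall>e>0. \<exists>B. finite B \<and> (\<forall>C. finite C \<longrightarrow> B \<subseteq> C \<longrightarrow> av (s - sum u C) \<le> e)"
    and t: "\<forall>e>0. \<exists>B. finite B \<and> (\<forall>C. finite C \<longrightarrow> B \<subseteq> C \<longrightarrow> av (t - sum v C) \<le> e)"
    and e: "e > 0"
  obtain B1 where B1: "finite B1" "\<And>C. finite C \<Longrightarrow> B1 \<subseteq> C \<Longrightarrow> av (s - sum u C) \<le> e"
    using s e by blast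
  obtain B2 where B2: "finite B2" "\<And>C. finite C \<Longrightarrow> B2 \<subseteq> C \<Longrightarrow> av (t - sum v C) \<le> e"
    using t e by blast
  show "\<exists>B. finite B \<and> (\<forall>C. finite C \<longrightarrow> B \<subseteq> C \<longrightarrow> av (s + t - sum (\<lambda>i. u i + v i) C) \<le> e)"
  proof (intro exI[of _ "B1 \<union> B2"] conjI allI impI)
    fix C assume C: "finite C" "B1 \<union> B2 \<subseteq> C"
    have eq: "s + t - sum (\<lambda>i. u i + v i) C = (s - sum u C) + (t - sum v C)"
      by (simp add: sum.distrib)
    show "av (s + t - sum (\<lambda>i. u i + v i) C) \<le> e"
      unfolding eq using B1(2)[of C] B2(2)[of C] C by (intro av_add_le) auto
  qed (use B1 B2 in auto)
qed

lemma usum_cmult: "usum_has u s \<Longrightarrow> usum_has (\<lambda>i. c * u i) (c * s)"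
  unfolding usum_has_def
proof (intro allI impI)
  fix e :: real assume s: "\<forall>e>0. \<exists>B. finite B \<and> (\<forall>C. finite C \<longrightarrow> B \<subseteq> C \<longrightarrow> av (s - sum u C) \<le> e)"
    and e: "e > 0"
  have "e / (av c + 1) > 0" using e by (simp add: add_nonneg_pos)
  then obtain B where B: "finite B" "\<And>C. finite C \<Longrightarrow> B \<subseteq> C \<Longrightarrow> av (s - sum u C) \<le> e / (av c + 1)"
    using s by blast
  show "\<exists>B. finite B \<and> (\<forall>C. finite C \<longrightarrow> B \<subseteq> C \<longrightarrow> av (c * s - sum (\<lambda>i. c * u i) C) \<le> e)"
  proof (intro exI[of _ B] conjI allI impI)
    fix C assume C: "finite C" "B \<subseteq> C"
    have "c * s - sum (\<lambda>i. c * u i) C = c * (s - sum u C)" by (simp add: sum_distrib_left right_diff_distrib)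
    then have "av (c * s - sum (\<lambda>i. c * u i) C) = av c * av (s - sum u C)" by simp
    also have "\<dots> \<le> av c * (e / (av c + 1))" using B(2)[OF C] by (intro mult_left_mono) auto
    also have "\<dots> = e * (av c / (av c + 1))" by simp
    also have "\<dots> \<le> e * 1"
    proof -
      have p: "0 < av c + 1" using av_nonneg[of c] by linarith
      have h: "av c / (av c + 1) \<le> 1" using divide_le_eq_1_pos[OF p] by simp
      show ?thesis by (rule mult_left_mono[OF h]) (use e in linarith)
    qed
    finally show "av (c * s - sum (\<lambda>i. c * u i) C) \<le> e" by simp
  qed (use B in auto)
qed

lemma usum_cmult_right: "usum_has u s \<Longrightarrow> usum_has (\<lambda>i. u i * c) (s * c)"
  using usum_cmult[of u s c] by (simp add: mult.commute)

lemma usum_neg: "usum_has u s \<Longrightarrow> usum_has (\<lambda>i. - u i) (- s)"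
  using usum_cmult[of u s "-1"] by simp

lemma usum_diff: "usum_has u s \<Longrightarrow> usum_has v t \<Longrightarrow> usum_has (\<lambda>i. u i - v i) (s - t)"
  using usum_add[of u s "\<lambda>i. - v i" "- t"] usum_neg[of v t] by simp

lemma usum_cong: "usum_has u s \<Longrightarrow> (\<And>i. u i = v i) \<Longrightarrow> usum_has v s"
proof -
  assume "usum_has u s" "\<And>i. u i = v i"
  then have "u = v" by auto
  then show ?thesis using \<open>usum_has u s\<close> by simp
qed

lemma usum_bound:
  assumes "usum_has u s" "\<And>i. av (u i) \<le> M" "0 \<le> M"
  shows "av s \<le> M"
proof -
  have key: "av s \<le> max e M" if "e > 0" for e
  proof -
    obtain B where B: "finite B" "av (s - sum u B) \<le> e"
      using assms(1) \<open>e>0\<close> unfolding usum_has_def by blast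
    have "av (sum u B) \<le> M" using assms by (intro av_sum_le) auto
    then show ?thesis using av_add[of "s - sum u B" "sum u B"] B by auto
  qed
  show ?thesis
  proof (rule ccontr)
    assume "\<not> av s \<le> M"
    then have "(av s - M) / 2 > 0" by simp
    from key[OF this] have "av s \<le> (av s - M) / 2 \<or> av s \<le> M" by (simp add: le_max_iff_disj)
    then show False
    proof
      assume "av s \<le> (av s - M) / 2"
      then have "2 * av s \<le> av s - M" by (simp add: field_simps)
      moreover have "0 \<le> av s" by simp
      ultimately show False using \<open>\<not> av s \<le> M\<close> assms(3) by linarith
    qed (use \<open>\<not> av s \<le> M\<close> in simp)
  qed
qed

lemma usum_reindex:
  assumes "bij h" "usum_has (u \<circ> h) s"
  shows "usum_has u s"
  unfolding usum_has_def
proof (intro allI impI)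
  fix e :: real assume "e > 0"
  then obtain B where B: "finite B" "\<And>C. finite C \<Longrightarrow> B \<subseteq> C \<Longrightarrow> av (s - sum (u \<circ> h) C) \<le> e"
    using assms(2) unfolding usum_has_def by blast
  show "\<exists>B. finite B \<and> (\<forall>C. finite C \<longrightarrow> B \<subseteq> C \<longrightarrow> av (s - sum u C) \<le> e)"
  proof (intro exI[of _ "h ` B"] conjI allI impI)
    fix C assume C: "finite C" "h ` B \<subseteq> C"
    have inj: "inj h" using assms(1) bij_is_inj by blast
    have fin: "finite (h -` C)" using C(1) inj by (simp add: finite_vimageI)
    have sub: "B \<subseteq> h -` C" using C(2) by auto
    have im: "h ` (h -` C) = C" using assms(1) by (simp add: bij_def surj_image_vimage_eq)
    have "sum u (h ` (h -` C)) = sum (u \<circ> h) (h -` C)"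
      using sum.reindex[OF inj_on_subset[OF inj subset_UNIV], of u "h -` C"] by simp
    then have "sum (u \<circ> h) (h -` C) = sum u C" using im by simp
    then show "av (s - sum u C) \<le> e" using B(2)[OF fin sub] by simp
  qed (use B in auto)
qed

lemma null_exists:
  assumes cpl: "complete_abs av" and nu: "null u"
  shows "\<exists>s. usum_has u s"
proof -
  define Cs where "Cs N = {i. 1 / real (Suc N) \<le> av (u i)}" for N
  have finC: "finite (Cs N)" for N using nu unfolding null_def Cs_def by auto
  have mono: "Cs N \<subseteq> Cs M" if "N \<le> M" for N M
  proof -
    have "1 / real (Suc M) \<le> 1 / real (Suc N)" using that by (simp add: frac_le)
    then show ?thesis unfolding Cs_def by auto
  qed
  have out: "av (u i) \<le> 1 / real (Suc N)" if "i \<notin> Cs N" for i N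
    using that unfolding Cs_def by auto
  define S where "S N = sum u (Cs N)" for N
  have key: "av (S M - sum u C) \<le> 1 / real (Suc N)"
    if "N \<le> M" "finite C" "Cs N \<subseteq> C" for N M C
    unfolding S_def
  proof (rule sum_diff_small)
    fix i assume "i \<in> Cs M - C \<union> (C - Cs M)"
    then have "i \<notin> Cs N" using that mono[of N M] by auto
    then show "av (u i) \<le> 1 / real (Suc N)" by (rule out)
  qed (use finC that in auto)
  have "\<exists>L. (\<lambda>n. av (S n - L)) \<longlonglongrightarrow> 0"
    using cpl unfolding complete_abs_def
  proof (elim allE impE)
    show "\<forall>e>0. \<exists>N. \<forall>m\<ge>N. \<forall>n\<ge>N. av (S m - S n) < e"
    proof (intro allI impI)
      fix e :: real assume "e > 0"
      then obtain N where N: "1 / real (Suc N) < e"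
        by (metis nat_approx_posE)
      show "\<exists>N. \<forall>m\<ge>N. \<forall>n\<ge>N. av (S m - S n) < e"
      proof (intro exI[of _ N] allI impI)
        fix m n assume "N \<le> m" "N \<le> n"
        then have "av (S m - S n) \<le> 1 / real (Suc N)"
          using key[of N m "Cs n"] finC mono by (simp add: S_def)
        then show "av (S m - S n) < e" using N by linarith
      qed
    qed
  qed
  then obtain L where L: "(\<lambda>n. av (S n - L)) \<longlonglongrightarrow> 0" by blast
  have "usum_has u L"
    unfolding usum_has_def
  proof (intro allI impI)
    fix e :: real assume "e > 0"
    then obtain N where N: "1 / real (Suc N) < e"
      by (metis nat_approx_posE)
    show "\<exists>B. finite B \<and> (\<forall>C. finite C \<longrightarrow> B \<subseteq> C \<longrightarrow> av (L - sum u C) \<le> e)"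
    proof (intro exI[of _ "Cs N"] conjI allI impI)
      fix C assume C: "finite C" "Cs N \<subseteq> C"
      obtain M where M: "\<forall>n\<ge>M. av (S n - L) < e"
        using L \<open>e>0\<close> unfolding lim_sequentially by (metis diff_zero abs_of_nonneg av_nonneg dist_real_def)
      define K where "K = max M N"
      have 1: "av (S K - L) < e" using M K_def by auto
      have 2: "av (S K - sum u C) \<le> 1 / real (Suc N)" using key[of N K C] C K_def by auto
      have "L - sum u C = (S K - sum u C) - (S K - L)" by simp
      then have "av (L - sum u C) \<le> max (av (S K - sum u C)) (av (S K - L))"
        using av_diff by metis
      then show "av (L - sum u C) \<le> e" using 1 2 N by linarith
    qed (use finC in auto)
  qed
  then show ?thesis by blast
qed

lemma usum_fubini:
  assumes tot: "usum_has w S"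
    and col: "\<And>j. usum_has (\<lambda>i. w (i, j)) (v j)"
  shows "usum_has v S"
  unfolding usum_has_def
proof (intro allI impI)
  fix e :: real assume e: "e > 0"
  obtain B1 where B1: "finite B1" "\<And>C. finite C \<Longrightarrow> B1 \<subseteq> C \<Longrightarrow> av (S - sum w C) \<le> e"
    using tot e unfolding usum_has_def by blast
  show "\<exists>B. finite B \<and> (\<forall>C. finite C \<longrightarrow> B \<subseteq> C \<longrightarrow> av (S - sum v C) \<le> e)"
  proof (intro exI[of _ "snd ` B1"] conjI allI impI)
    fix J assume J: "finite J" "snd ` B1 \<subseteq> J"
    have "\<exists>I. finite I \<and> fst ` B1 \<subseteq> I \<and> av (v j - sum (\<lambda>i. w (i, j)) I) \<le> e" for j
    proof -
      obtain B where B: "finite B" "\<And>C. finite C \<Longrightarrow> B \<subseteq> C \<Longrightarrow> av (v j - sum (\<lambda>i. w (i, j)) C) \<le> e"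
        using col[of j] e unfolding usum_has_def by blast
      show ?thesis using B B1(1) by (intro exI[of _ "B \<union> fst ` B1"]) auto
    qed
    define I where "I j = (SOME I. finite I \<and> fst ` B1 \<subseteq> I \<and> av (v j - sum (\<lambda>i. w (i, j)) I) \<le> e)" for j
    have Ij: "finite (I j) \<and> fst ` B1 \<subseteq> I j \<and> av (v j - sum (\<lambda>i. w (i, j)) (I j)) \<le> e" for j
      unfolding I_def by (rule someI_ex) fact
    have I: "\<And>j. finite (I j)" "\<And>j. fst ` B1 \<subseteq> I j"
      "\<And>j. av (v j - sum (\<lambda>i. w (i, j)) (I j)) \<le> e" using Ij by blast+
    define C where "C = Sigma J (\<lambda>j. I j)"
    have finC: "finite C" using J(1) I(1) unfolding C_def by auto
    have subC: "(\<lambda>(j,i). (i,j)) ` C \<supseteq> B1"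
    proof
      fix x assume x: "x \<in> B1"
      have 1: "snd x \<in> J" using J(2) x by blast
      have 2: "fst x \<in> I (snd x)" using I(2) x by blast
      have 3: "(snd x, fst x) \<in> C" unfolding C_def using 1 2 by blast
      have 4: "x = (\<lambda>(j,i). (i,j)) (snd x, fst x)" by simp
      show "x \<in> (\<lambda>(j,i). (i,j)) ` C" using 3 4 by (rule rev_image_eqI)
    qed
    have injsw: "inj_on (\<lambda>(j,i). (i,j)) C" by (auto simp: inj_on_def)
    have eqf: "w \<circ> (\<lambda>(j,i). (i,j)) = (\<lambda>(j,i). w (i,j))" by (auto simp: fun_eq_iff)
    have "sum w ((\<lambda>(j,i). (i,j)) ` C) = sum (\<lambda>(j,i). w (i,j)) C"
      using sum.reindex[OF injsw, of w] eqf by simp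
    also have "\<dots> = (\<Sum>j\<in>J. sum (\<lambda>i. w (i, j)) (I j))"
      unfolding C_def using sum.Sigma[OF J(1), of I "\<lambda>j i. w (i, j)"] I(1) by simp
    finally have eq: "sum w ((\<lambda>(j,i). (i,j)) ` C) = (\<Sum>j\<in>J. sum (\<lambda>i. w (i, j)) (I j))" .
    have a1: "av (S - (\<Sum>j\<in>J. sum (\<lambda>i. w (i, j)) (I j))) \<le> e"
    proof -
      have "finite ((\<lambda>(j,i). (i,j)) ` C)" using finC by (rule finite_imageI)
      from B1(2)[OF this subC] show ?thesis unfolding eq .
    qed
    have a2: "av (sum v J - (\<Sum>j\<in>J. sum (\<lambda>i. w (i, j)) (I j))) \<le> e"
    proof -
      have "sum v J - (\<Sum>j\<in>J. sum (\<lambda>i. w (i, j)) (I j)) = (\<Sum>j\<in>J. v j - sum (\<lambda>i. w (i, j)) (I j))"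
        by (simp add: sum_subtractf)
      then show ?thesis using I(3) e by (auto intro!: av_sum_le)
    qed
    have "S - sum v J = (S - (\<Sum>j\<in>J. sum (\<lambda>i. w (i, j)) (I j))) - (sum v J - (\<Sum>j\<in>J. sum (\<lambda>i. w (i, j)) (I j)))"
      by simp
    then show "av (S - sum v J) \<le> e" using av_diff_le[OF a1 a2] by simp
  qed (use B1 in auto)
qed

end


lemma finite_int_bounded: "finite (B::int set) \<Longrightarrow> \<exists>N::nat. B \<subseteq> {- int N..int N}"
proof -
  assume "finite B"
  define M where "M = Max (abs ` B \<union> {0})"
  have "\<forall>x\<in>B. \<bar>x\<bar> \<le> M" unfolding M_def using \<open>finite B\<close> by (intro ballI Max_ge) auto
  have "0 \<le> M" unfolding M_def using \<open>finite B\<close> by (intro Max_ge) auto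
  have "x \<in> {- int (nat M)..int (nat M)}" if "x \<in> B" for x
  proof -
    have "\<bar>x\<bar> \<le> M" using \<open>\<forall>x\<in>B. \<bar>x\<bar> \<le> M\<close> that by blast
    then show ?thesis using \<open>0 \<le> M\<close> by (auto simp: abs_le_iff)
  qed
  then show ?thesis by blast
qed

context NA
begin

abbreviation EK where "EK \<equiv> in_EK av"
abbreviation gn where "gn \<equiv> gauss_norm av"
abbreviation mul where "mul \<equiv> ls_mult av"

lemma EK_bound: "EK a \<Longrightarrow> \<exists>R. 0 < R \<and> (\<forall>i. av (a i) \<le> R)"
proof -
  assume "EK a"
  then obtain R where "\<forall>i. av (a i) \<le> R" unfolding in_EK_def bdd_above_def by auto
  then show ?thesis by (intro exI[of _ "max R 1"]) (auto simp: le_max_iff_disj)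
qed

lemma EK_tail: "EK a \<Longrightarrow> e > 0 \<Longrightarrow> \<exists>N::int. \<forall>i<N. av (a i) < e"
proof -
  assume "EK a" "e > 0"
  then have "(\<lambda>n::nat. av (a (- int n))) \<longlonglongrightarrow> 0" unfolding in_EK_def by blast
  then obtain N where N: "\<forall>n\<ge>N. av (a (- int n)) < e"
    using \<open>e>0\<close> unfolding lim_sequentially by (metis abs_of_nonneg av_nonneg diff_zero dist_real_def)
  show ?thesis
  proof (intro exI[of _ "- int N"] allI impI)
    fix i :: int assume "i < - int N"
    then have "nat (- i) \<ge> N" "i = - int (nat (-i))" by auto
    then show "av (a i) < e" using N by metis
  qed
qed

lemma EK_intro:
  assumes "\<And>i. av (a i) \<le> R" "\<And>e. e > 0 \<Longrightarrow> \<exists>N::int. \<forall>i<N. av (a i) < e"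
  shows "EK a"
  unfolding in_EK_def
proof
  show "bdd_above (range (\<lambda>i. av (a i)))" by (intro bdd_aboveI[of _ R]) (use assms(1) in auto)
  show "(\<lambda>n::nat. av (a (- int n))) \<longlonglongrightarrow> 0"
  proof (rule LIMSEQ_I)
    fix r :: real assume "r > 0"
    then obtain N where N: "\<forall>i<N. av (a i) < r" using assms(2) by blast
    show "\<exists>no. \<forall>n\<ge>no. norm (av (a (- int n)) - 0) < r"
      by (intro exI[of _ "nat (1 - N)"]) (use N in auto)
  qed
qed

lemma gn_upper: "EK a \<Longrightarrow> av (a i) \<le> gn a"
  unfolding gauss_norm_def in_EK_def by (auto intro: cSUP_upper)

lemma gn_least: "(\<And>i. av (a i) \<le> M) \<Longrightarrow> gn a \<le> M"
  unfolding gauss_norm_def by (rule cSUP_least) auto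

lemma gn_nonneg: "EK a \<Longrightarrow> 0 \<le> gn a"
  using gn_upper[of a 0] av_nonneg[of "a 0"] by linarith

lemma gn_zero_iff: "EK a \<Longrightarrow> gn a = 0 \<longleftrightarrow> (\<forall>i. a i = 0)"
proof
  assume "EK a" "gn a = 0"
  then show "\<forall>i. a i = 0" using gn_upper[of a] av_nonneg by (metis antisym av_eq0)
next
  assume "\<forall>i. a i = 0" "EK a"
  then show "gn a = 0" using gn_least[of a 0] gn_nonneg[of a] by auto
qed

lemma EK_one: "EK ls_one"
  by (rule EK_intro[where R=1]) (auto simp: ls_one_def intro: exI[of _ 0])

lemma gn_one: "gn ls_one = 1"
proof -
  have "gn ls_one \<le> 1" by (rule gn_least) (simp add: ls_one_def)
  moreover have "av (ls_one 0) \<le> gn ls_one" by (rule gn_upper[OF EK_one])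
  ultimately show ?thesis by (simp add: ls_one_def)
qed

lemma EK_add: "EK a \<Longrightarrow> EK b \<Longrightarrow> EK (\<lambda>i. a i + b i)"
proof -
  assume a: "EK a" and b: "EK b"
  obtain Ra where Ra: "\<forall>i. av (a i) \<le> Ra" using EK_bound[OF a] by blast
  obtain Rb where Rb: "\<forall>i. av (b i) \<le> Rb" using EK_bound[OF b] by blast
  show ?thesis
  proof (rule EK_intro[where R="max Ra Rb"])
    fix i have "av (a i) \<le> max Ra Rb" "av (b i) \<le> max Ra Rb" using Ra Rb by (auto simp: le_max_iff_disj)
    then show "av (a i + b i) \<le> max Ra Rb" by (rule av_add_le)
  next
    fix e :: real assume "e > 0"
    obtain N1 where N1: "\<forall>i<N1. av (a i) < e" using EK_tail[OF a \<open>e>0\<close>] by blast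
    obtain N2 where N2: "\<forall>i<N2. av (b i) < e" using EK_tail[OF b \<open>e>0\<close>] by blast
    show "\<exists>N. \<forall>i<N. av (a i + b i) < e"
    proof (intro exI[of _ "min N1 N2"] allI impI)
      fix i assume "i < min N1 N2"
      then have "av (a i) < e" "av (b i) < e" using N1 N2 by auto
      then show "av (a i + b i) < e" using av_add[of "a i" "b i"] by linarith
    qed
  qed
qed

lemma EK_ls_add: "EK a \<Longrightarrow> EK b \<Longrightarrow> EK (ls_add a b)"
  unfolding ls_add_def by (rule EK_add)

lemma EK_cmult: "EK a \<Longrightarrow> EK (\<lambda>i. c i * a i)" if "\<And>i. av (c i) \<le> 1"
proof -
  assume a: "EK a"
  obtain Ra where Ra: "\<forall>i. av (a i) \<le> Ra" using EK_bound[OF a] by blast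
  have le: "av (c i * a i) \<le> av (a i)" for i
    using that[of i] by (simp add: mult_left_le_one_le)
  show ?thesis
  proof (rule EK_intro[where R=Ra])
    fix i show "av (c i * a i) \<le> Ra" using le[of i] Ra by (meson order.trans)
  next
    fix e :: real assume "e > 0"
    obtain N1 where N1: "\<forall>i<N1. av (a i) < e" using EK_tail[OF a \<open>e>0\<close>] by blast
    show "\<exists>N. \<forall>i<N. av (c i * a i) < e"
    proof (intro exI[of _ N1] allI impI)
      fix i assume "i < N1" then show "av (c i * a i) < e" using N1 le[of i] by auto
    qed
  qed
qed

lemma EK_smult: "EK a \<Longrightarrow> EK (\<lambda>i. c * a i)"
proof -
  assume a: "EK a"
  obtain Ra where Ra: "\<forall>i. av (a i) \<le> Ra" using EK_bound[OF a] by blast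
  show ?thesis
  proof (rule EK_intro[where R="av c * Ra"])
    fix i show "av (c * a i) \<le> av c * Ra" using Ra by (simp add: mult_left_mono)
  next
    fix e :: real assume "e > 0"
    have "e / (av c + 1) > 0" using \<open>e>0\<close> by (simp add: add_nonneg_pos)
    then obtain N1 where N1: "\<forall>i<N1. av (a i) < e / (av c + 1)" using EK_tail[OF a] by blast
    have "av (c * a i) < e" if "i < N1" for i
    proof -
      have "av (c * a i) = av c * av (a i)" by simp
      also have "\<dots> \<le> av c * (e / (av c + 1))" by (rule mult_left_mono[OF less_imp_le]) (use N1 that in auto)
      also have "\<dots> < e"
      proof -
        have p: "0 < av c + 1" using av_nonneg[of c] by linarith
        have "av c * (e / (av c + 1)) = e * (av c / (av c + 1))" by simp
        also have "\<dots> < e * 1" using \<open>e>0\<close> p by (intro mult_strict_left_mono) auto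
        finally show ?thesis by simp
      qed
      finally show ?thesis .
    qed
    then show "\<exists>N. \<forall>i<N. av (c * a i) < e" by blast
  qed
qed

lemma EK_neg: "EK a \<Longrightarrow> EK (\<lambda>i. - a i)"
  using EK_smult[of a "-1"] by simp

lemma EK_diff: "EK a \<Longrightarrow> EK b \<Longrightarrow> EK (\<lambda>i. a i - b i)"
  using EK_add[of a "\<lambda>i. - b i"] EK_neg[of b] by simp

lemma EK_zero: "EK (\<lambda>i. 0)"
  by (rule EK_intro[where R=0]) auto

lemma EK_sum: "(\<And>k. k \<in> S \<Longrightarrow> EK (f k)) \<Longrightarrow> EK (\<lambda>i. \<Sum>k\<in>S. f k i)"
proof (induction S rule: infinite_finite_induct)
  case (insert x F) then show ?case using EK_add[of "f x" "\<lambda>i. \<Sum>k\<in>F. f k i"] by simp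
qed (auto intro: EK_zero)

lemma EK_divT: "EK a \<Longrightarrow> EK (ls_divT a)"
proof -
  assume a: "EK a"
  obtain Ra where Ra: "\<forall>i. av (a i) \<le> Ra" using EK_bound[OF a] by blast
  show ?thesis unfolding ls_divT_def
  proof (rule EK_intro[where R=Ra])
    fix e :: real assume "e > 0"
    obtain N1 where N1: "\<forall>i<N1. av (a i) < e" using EK_tail[OF a \<open>e>0\<close>] by blast
    show "\<exists>N. \<forall>i<N. av (a (i + 1)) < e" by (intro exI[of _ "N1 - 1"]) (use N1 in auto)
  qed (use Ra in auto)
qed

lemma gn_divT: "EK a \<Longrightarrow> gn (ls_divT a) \<le> gn a"
  unfolding ls_divT_def by (rule gn_least) (rule gn_upper)

lemma gn_add: assumes "EK a" "EK b" shows "gn (\<lambda>i. a i + b i) \<le> max (gn a) (gn b)"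
proof (rule gn_least)
  fix i
  have "av (a i) \<le> max (gn a) (gn b)" "av (b i) \<le> max (gn a) (gn b)"
    using gn_upper[OF assms(1), of i] gn_upper[OF assms(2), of i] by (auto simp: le_max_iff_disj)
  then show "av (a i + b i) \<le> max (gn a) (gn b)" by (rule av_add_le)
qed

lemma bij_minus_int: "bij (\<lambda>i::int. n - i)"
  by (rule o_bij[where g="\<lambda>i. n - i"]) (auto simp: fun_eq_iff)
lemma bij_plus_int: "bij (\<lambda>i::int. i + c)"
  by (rule o_bij[where g="\<lambda>i. i - c"]) (auto simp: fun_eq_iff)
lemma bij_swap: "bij (\<lambda>(x::'c,y::'d). (y,x))"
  by (rule o_bij[where g="\<lambda>(x,y). (y,x)"]) (auto simp: fun_eq_iff)

lemma small3:
  fixes x y z R d :: real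
  assumes "0 \<le> x" "x < d" "0 \<le> y" "y \<le> R" "0 \<le> z" "z \<le> R" "0 < R"
  shows "x * y * z < d * R * R"
proof -
  have "x * y * z \<le> x * R * R" using assms by (intro mult_mono) (auto intro: mult_mono mult_nonneg_nonneg)
  also have "\<dots> < d * R * R" using assms by (intro mult_strict_right_mono) auto
  finally show ?thesis .
qed

lemma small2:
  fixes x y R d :: real
  assumes "0 \<le> x" "x < d" "0 \<le> y" "y \<le> R" "0 < R"
  shows "x * y < d * R"
proof -
  have "x * y \<le> x * R" using assms by (intro mult_left_mono) auto
  also have "\<dots> < d * R" using assms by (intro mult_strict_right_mono) auto
  finally show ?thesis .
qed

lemma EK_common:
  assumes "EK a" "EK b" "EK c"
  shows "\<exists>R. 0 < R \<and> (\<forall>i. av (a i) \<le> R \<and> av (b i) \<le> R \<and> av (c i) \<le> R)"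
proof -
  obtain Ra where Ra: "0 < Ra" "\<forall>i. av (a i) \<le> Ra" using EK_bound[OF assms(1)] by blast
  obtain Rb where Rb: "0 < Rb" "\<forall>i. av (b i) \<le> Rb" using EK_bound[OF assms(2)] by blast
  obtain Rc where Rc: "0 < Rc" "\<forall>i. av (c i) \<le> Rc" using EK_bound[OF assms(3)] by blast
  show ?thesis using Ra Rb Rc
    by (intro exI[of _ "max Ra (max Rb Rc)"]) (auto simp: le_max_iff_disj less_max_iff_disj)
qed

lemma EK_tail3:
  assumes "EK a" "EK b" "EK c" "d > 0"
  shows "\<exists>N::int. \<forall>i<N. av (a i) < d \<and> av (b i) < d \<and> av (c i) < d"
proof -
  obtain N1 where N1: "\<forall>i<N1. av (a i) < d" using EK_tail[OF assms(1,4)] by blast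
  obtain N2 where N2: "\<forall>i<N2. av (b i) < d" using EK_tail[OF assms(2,4)] by blast
  obtain N3 where N3: "\<forall>i<N3. av (c i) < d" using EK_tail[OF assms(3,4)] by blast
  show ?thesis using N1 N2 N3 by (intro exI[of _ "min N1 (min N2 N3)"]) auto
qed

section \<open>Products\<close>

lemma mult_null:
  assumes a: "EK a" and b: "EK b"
  shows "null (\<lambda>i. a i * b (n - i))"
  unfolding null_def
proof (intro allI impI)
  fix e :: real assume e: "e > 0"
  obtain R where R: "0 < R" "\<forall>i. av (a i) \<le> R \<and> av (b i) \<le> R \<and> av (b i) \<le> R"
    using EK_common[OF a b b] by blast
  have "e / R > 0" using e R by auto
  then obtain N where N: "\<forall>i<N. av (a i) < e / R \<and> av (b i) < e / R \<and> av (b i) < e / R"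
    using EK_tail3[OF a b b] by blast
  have eq: "e / R * R = e" using R by simp
  have "{i. e \<le> av (a i * b (n - i))} \<subseteq> {N..n - N}"
  proof
    fix i assume i: "i \<in> {i. e \<le> av (a i * b (n - i))}"
    have "\<not> i < N"
    proof
      assume "i < N"
      then have "av (a i) * av (b (n - i)) < e / R * R" using N R by (intro small2) auto
      then show False using i eq by auto
    qed
    moreover have "\<not> n - i < N"
    proof
      assume "n - i < N"
      then have "av (b (n - i)) * av (a i) < e / R * R" using N R by (intro small2) auto
      then show False using i eq by (auto simp: mult.commute)
    qed
    ultimately show "i \<in> {N..n - N}" by auto
  qed
  then show "finite {i. e \<le> av (a i * b (n - i))}" by (rule finite_subset) auto
qed

lemma triple_null:
  assumes a: "EK a" and b: "EK b" and c: "EK c"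
  shows "null (\<lambda>(i,j). a i * b (j - i) * c (n - j))"
  unfolding null_def
proof (intro allI impI)
  fix e :: real assume e: "e > 0"
  obtain R where R: "0 < R" "\<forall>i. av (a i) \<le> R \<and> av (b i) \<le> R \<and> av (c i) \<le> R"
    using EK_common[OF a b c] by blast
  have "e / (R * R) > 0" using e R by auto
  then obtain N where N: "\<forall>i<N. av (a i) < e / (R * R) \<and> av (b i) < e / (R * R) \<and> av (c i) < e / (R * R)"
    using EK_tail3[OF a b c] by blast
  have eq: "e / (R * R) * R * R = e" using R by simp
  have "{x. e \<le> av ((\<lambda>(i,j). a i * b (j - i) * c (n - j)) x)} \<subseteq> {N..n - 2 * N} \<times> {2 * N..n - N}"
  proof
    fix x assume x: "x \<in> {x. e \<le> av ((\<lambda>(i,j). a i * b (j - i) * c (n - j)) x)}"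
    obtain i j where ij: "x = (i, j)" by (cases x)
    have ge: "e \<le> av (a i) * av (b (j - i)) * av (c (n - j))" using x ij by simp
    have 1: "\<not> i < N"
    proof
      assume "i < N"
      then have "av (a i) * av (b (j - i)) * av (c (n - j)) < e / (R * R) * R * R"
        using N R by (intro small3) auto
      then show False using ge eq by auto
    qed
    have 2: "\<not> j - i < N"
    proof
      assume "j - i < N"
      then have "av (b (j - i)) * av (a i) * av (c (n - j)) < e / (R * R) * R * R"
        using N R by (intro small3) auto
      then show False using ge eq by (auto simp: mult.commute mult.left_commute)
    qed
    have 3: "\<not> n - j < N"
    proof
      assume "n - j < N"
      then have "av (c (n - j)) * av (a i) * av (b (j - i)) < e / (R * R) * R * R"
        using N R by (intro small3) auto
      then show False using ge eq by (auto simp: mult.commute mult.left_commute)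
    qed
    show "x \<in> {N..n - 2 * N} \<times> {2 * N..n - N}" using 1 2 3 ij by auto
  qed
  then show "finite {x. e \<le> av ((\<lambda>(i,j). a i * b (j - i) * c (n - j)) x)}"
    by (rule finite_subset) auto
qed

end

locale NAC = NA + assumes cpl: "complete_abs av"
begin

lemma usum_symsum:
  fixes u :: "int \<Rightarrow> 'a"
  assumes "usum_has u s"
  shows "(\<lambda>N. av (sum u {- int N..int N} - s)) \<longlonglongrightarrow> 0"
proof (rule LIMSEQ_I)
  fix r :: real assume "r > 0"
  then have "r / 2 > 0" by simp
  from assms[unfolded usum_has_def, rule_format, OF this] obtain B where
    B: "finite B" "\<And>C. finite C \<Longrightarrow> B \<subseteq> C \<Longrightarrow> av (s - sum u C) \<le> r / 2"
    by auto
  obtain N0 where N0: "B \<subseteq> {- int N0..int N0}" using finite_int_bounded[OF B(1)] by blast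
  show "\<exists>no. \<forall>n\<ge>no. norm (av (sum u {- int n..int n} - s) - 0) < r"
  proof (intro exI[of _ N0] allI impI)
    fix n assume "N0 \<le> n"
    then have "{- int N0..int N0} \<subseteq> {- int n..int n}" by simp
    then have "B \<subseteq> {- int n..int n}" using N0 by (rule order_trans[rotated])
    then have "av (s - sum u {- int n..int n}) \<le> r / 2" by (intro B(2)) simp_all
    then have "av (sum u {- int n..int n} - s) \<le> r / 2" using av_diff_commute[of s "sum u {- int n..int n}"] by simp
    then show "norm (av (sum u {- int n..int n} - s) - 0) < r"
      using \<open>r>0\<close> by simp
  qed
qed

lemma mul_usum:
  assumes a: "EK a" and b: "EK b"
  shows "usum_has (\<lambda>i. a i * b (n - i)) (mul a b n)"
proof -
  obtain s where s: "usum_has (\<lambda>i. a i * b (n - i)) s"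
    using null_exists[OF cpl mult_null[OF a b]] by blast
  have "mul a b n = s"
    unfolding ls_mult_def using av_lim_eq[OF usum_symsum[OF s]] by simp
  then show ?thesis using s by simp
qed

lemma mul_eq:
  assumes "EK a" "EK b" "usum_has (\<lambda>i. a i * b (n - i)) s"
  shows "mul a b n = s"
  using usum_unique[OF mul_usum[OF assms(1,2)] assms(3)] .

lemma mul_bound:
  assumes a: "EK a" and b: "EK b" and "\<And>i j. av (a i) * av (b j) \<le> M" "0 \<le> M"
  shows "av (mul a b n) \<le> M"
  using usum_bound[OF mul_usum[OF a b, of n]] assms(3,4) by simp

lemma gn_mul:
  assumes a: "EK a" and b: "EK b"
  shows "gn (mul a b) \<le> gn a * gn b"
proof (rule gn_least)
  fix n
  show "av (mul a b n) \<le> gn a * gn b"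
  proof (rule mul_bound[OF a b])
    fix i j show "av (a i) * av (b j) \<le> gn a * gn b"
      using gn_upper[OF a] gn_upper[OF b] gn_nonneg[OF a] by (intro mult_mono) auto
  qed (use gn_nonneg[OF a] gn_nonneg[OF b] in simp)
qed

lemma EK_mul:
  assumes a: "EK a" and b: "EK b"
  shows "EK (mul a b)"
proof -
  obtain R where R: "0 < R" "\<forall>i. av (a i) \<le> R \<and> av (b i) \<le> R \<and> av (b i) \<le> R"
    using EK_common[OF a b b] by blast
  show ?thesis
  proof (rule EK_intro[where R="R * R"])
    fix n show "av (mul a b n) \<le> R * R"
      by (rule mul_bound[OF a b]) (use R in \<open>auto intro: mult_mono\<close>)
  next
    fix e :: real assume e: "e > 0"
    have "e / 2 / R > 0" using e R by auto
    then obtain N where N: "\<forall>i<N. av (a i) < e / 2 / R \<and> av (b i) < e / 2 / R \<and> av (b i) < e / 2 / R"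
      using EK_tail3[OF a b b] by blast
    have eq: "e / 2 / R * R = e / 2" using R by simp
    show "\<exists>N. \<forall>n<N. av (mul a b n) < e"
    proof (intro exI[of _ "N + N"] allI impI)
      fix n assume n: "n < N + N"
      have "av (mul a b n) \<le> e / 2"
      proof (rule usum_bound[OF mul_usum[OF a b]])
        fix i
        show "av (a i * b (n - i)) \<le> e / 2"
        proof (cases "i < N")
          case True
          then have "av (a i) * av (b (n - i)) < e / 2 / R * R" using N R by (intro small2) auto
          then show ?thesis using eq by simp
        next
          case False
          then have "n - i < N" using n by simp
          then have "av (b (n - i)) * av (a i) < e / 2 / R * R" using N R by (intro small2) auto
          then show ?thesis using eq by (simp add: mult.commute)
        qed
      qed (use e in simp)
      then show "av (mul a b n) < e" using e by simp
    qed
  qed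
qed

lemma mul_comm:
  assumes a: "EK a" and b: "EK b"
  shows "mul a b = mul b a"
proof
  fix n
  have "usum_has ((\<lambda>i. b i * a (n - i)) \<circ> (\<lambda>i. n - i)) (mul a b n)"
    by (rule usum_cong[OF mul_usum[OF a b]]) (simp add: mult.commute)
  then have "usum_has (\<lambda>i. b i * a (n - i)) (mul a b n)"
    by (rule usum_reindex[OF bij_minus_int])
  then show "mul a b n = mul b a n" using mul_eq[OF b a] by simp
qed

lemma mul_add_left:
  assumes a: "EK a" and b: "EK b" and c: "EK c"
  shows "mul (\<lambda>i. a i + b i) c n = mul a c n + mul b c n"
proof (rule mul_eq[OF EK_add[OF a b] c])
  show "usum_has (\<lambda>i. (a i + b i) * c (n - i)) (mul a c n + mul b c n)"
    by (rule usum_cong[OF usum_add[OF mul_usum[OF a c] mul_usum[OF b c]]]) (simp add: distrib_right)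
qed

lemma mul_smult_left:
  assumes a: "EK a" and c: "EK c"
  shows "mul (\<lambda>i. k * a i) c n = k * mul a c n"
proof (rule mul_eq[OF EK_smult[OF a] c])
  show "usum_has (\<lambda>i. (k * a i) * c (n - i)) (k * mul a c n)"
    by (rule usum_cong[OF usum_cmult[OF mul_usum[OF a c]]]) (simp add: mult.assoc)
qed

lemma mul_zero_left: "EK c \<Longrightarrow> mul (\<lambda>i. 0) c n = 0"
  using mul_smult_left[OF EK_zero, of c 0 n] by simp

lemma mul_sum_left:
  assumes "\<And>k. k \<in> S \<Longrightarrow> EK (f k)" "EK c"
  shows "mul (\<lambda>i. \<Sum>k\<in>S. f k i) c n = (\<Sum>k\<in>S. mul (f k) c n)"
  using assms(1)
proof (induction S rule: infinite_finite_induct)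
  case (infinite A) then show ?case using mul_zero_left[OF assms(2)] by simp
next
  case empty then show ?case using mul_zero_left[OF assms(2)] by simp
next
  case (insert x F)
  have "mul (\<lambda>i. \<Sum>k\<in>insert x F. f k i) c n = mul (\<lambda>i. f x i + (\<Sum>k\<in>F. f k i)) c n"
    using insert(1,2) by simp
  also have "\<dots> = mul (f x) c n + mul (\<lambda>i. \<Sum>k\<in>F. f k i) c n"
    by (rule mul_add_left) (use insert(4) in \<open>auto intro!: EK_sum assms(2)\<close>)
  also have "\<dots> = (\<Sum>k\<in>insert x F. mul (f k) c n)" using insert by simp
  finally show ?case .
qed

lemma mul_one_right: "EK a \<Longrightarrow> mul a ls_one n = a n"
proof -
  assume a: "EK a"
  have "usum_has (\<lambda>i. a i * ls_one (n - i)) (sum (\<lambda>i. a i * ls_one (n - i)) {n})"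
    by (rule usum_finite) (auto simp: ls_one_def)
  then show ?thesis using mul_eq[OF a EK_one] by (simp add: ls_one_def)
qed

lemma mul_divT_left:
  assumes a: "EK a" and b: "EK b"
  shows "ls_divT (mul a b) n = mul (ls_divT a) b n"
proof -
  have "usum_has ((\<lambda>i. a i * b (n + 1 - i)) \<circ> (\<lambda>i. i + 1)) (mul (ls_divT a) b n)"
    by (rule usum_cong[OF mul_usum[OF EK_divT[OF a] b]]) (simp add: ls_divT_def)
  then have "usum_has (\<lambda>i. a i * b (n + 1 - i)) (mul (ls_divT a) b n)"
    by (rule usum_reindex[OF bij_plus_int])
  then show ?thesis unfolding ls_divT_def using mul_eq[OF a b] by simp
qed

lemma mul_assoc:
  assumes a: "EK a" and b: "EK b" and c: "EK c"
  shows "mul (mul a b) c n = mul a (mul b c) n"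
proof -
  define w where "w = (\<lambda>(i,j). a i * b (j - i) * c (n - j))"
  obtain S where S: "usum_has w S"
    using null_exists[OF cpl triple_null[OF a b c, of n]] unfolding w_def by blast
  have col: "usum_has (\<lambda>i. w (i, j)) (mul a b j * c (n - j))" for j
    unfolding w_def using usum_cmult_right[OF mul_usum[OF a b, of j], of "c (n - j)"] by simp
  have 1: "usum_has (\<lambda>j. mul a b j * c (n - j)) S" by (rule usum_fubini[OF S col])
  have L: "mul (mul a b) c n = S" using mul_eq[OF EK_mul[OF a b] c 1] .
  have S': "usum_has (w \<circ> (\<lambda>(j,i). (i,j))) S"
  proof -
    have "usum_has ((w \<circ> (\<lambda>(j,i). (i,j))) \<circ> (\<lambda>(i,j). (j,i))) S"
      by (rule usum_cong[OF S]) auto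
    then show ?thesis by (rule usum_reindex[OF bij_swap])
  qed
  have row: "usum_has (\<lambda>j. (w \<circ> (\<lambda>(j,i). (i,j))) (j, i)) (a i * mul b c (n - i))" for i
  proof -
    have "usum_has ((\<lambda>j. b (j - i) * c (n - j)) \<circ> (\<lambda>k. k + i)) (mul b c (n - i))"
      by (rule usum_cong[OF mul_usum[OF b c, of "n - i"]]) (simp add: algebra_simps)
    then have "usum_has (\<lambda>j. b (j - i) * c (n - j)) (mul b c (n - i))"
      by (rule usum_reindex[OF bij_plus_int])
    from usum_cmult[OF this, of "a i"] show ?thesis
      unfolding w_def by (simp add: mult.assoc)
  qed
  have 2: "usum_has (\<lambda>i. a i * mul b c (n - i)) S" by (rule usum_fubini[OF S' row])
  have R: "mul a (mul b c) n = S" using mul_eq[OF a EK_mul[OF b c] 2] .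
  show ?thesis using L R by simp
qed

end


locale QL = NAC +
  fixes q :: 'a
  assumes q1: "av (q - 1) < 1" and qnr: "\<forall>n>0. q ^ n \<noteq> 1"
begin

lemma q_ne1: "q \<noteq> 1" using qnr by (metis power_one_right zero_less_one)
lemma q_ne0: "q \<noteq> 0"
proof
  assume "q = 0" then have "av (q - 1) = 1" by simp
  then show False using q1 by simp
qed
lemma av_q[simp]: "av q = 1"
proof -
  have "av ((q - 1) + 1) = av 1" by (rule av_add_strict) (use q1 in simp)
  then show ?thesis by simp
qed
lemma av_qpowi[simp]: "av (q powi i) = 1" using av_q by simp
lemma av_qpow[simp]: "av (q ^ n) = 1" using av_q by simp
lemma qm1_ne0: "q - 1 \<noteq> 0" using q_ne1 by simp
lemma av_qm1_pos: "0 < av (q - 1)" using qm1_ne0 av_pos by blast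

definition qint :: "int \<Rightarrow> 'a" where "qint i = (q powi i - 1) / (q - 1)"

lemma qint_nat: "qint (int n) = (\<Sum>k<n. q ^ k)"
  unfolding qint_def using geometric_sum[OF q_ne1, of n] by simp

lemma q_int_eq: "q_int q n = qint (int n)"
  unfolding qint_def q_int_def by simp

lemma av_qint_nat: "av (qint (int n)) \<le> 1"
  unfolding qint_nat by (rule av_sum_le) auto

lemma qint_neg: "qint (- i) = - (q powi (- i)) * qint i"
proof -
  have "q powi i \<noteq> 0" using q_ne0 by simp
  have "q powi (- i) - 1 = - (q powi (- i)) * (q powi i - 1)"
    using \<open>q powi i \<noteq> 0\<close> by (simp add: power_int_minus algebra_simps)
  then show ?thesis unfolding qint_def by (simp add: divide_simps)
qed

lemma av_qint_neg: "av (qint (- i)) = av (qint i)"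
  using qint_neg[of i] by simp

lemma av_qint: "av (qint i) \<le> 1"
proof (cases "i \<ge> 0")
  case True
  then show ?thesis using av_qint_nat[of "nat i"] by simp
next
  case False
  then have "i = - int (nat (- i))" by simp
  then show ?thesis using av_qint_nat[of "nat (- i)"] av_qint_neg[of "int (nat (-i))"] by metis
qed

lemma qint_0[simp]: "qint 0 = 0" unfolding qint_def by simp

lemma qint_add: "qint (a + b) = qint a + q powi a * qint b"
proof -
  have "q powi (a + b) - 1 = (q powi a - 1) + q powi a * (q powi b - 1)"
    using q_ne0 by (simp add: power_int_add algebra_simps)
  then have "qint (a + b) = ((q powi a - 1) + q powi a * (q powi b - 1)) / (q - 1)"
    unfolding qint_def by (simp only:)
  also have "\<dots> = qint a + q powi a * qint b"
    unfolding qint_def by (simp only: add_divide_distrib times_divide_eq_right)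
  finally show ?thesis .
qed

lemma q_int_ne0: "n > 0 \<Longrightarrow> q_int q n \<noteq> 0"
  unfolding q_int_def using qnr qm1_ne0 by auto

lemma q_fact_ne0: "q_fact q n \<noteq> 0"
  unfolding q_fact_def using q_int_ne0 by (auto simp: prod_zero_iff)

lemma q_fact_Suc: "q_fact q (Suc n) = q_fact q n * q_int q (Suc n)"
  unfolding q_fact_def by (simp add: prod.nat_ivl_Suc' mult.commute)

lemma q_fact_0[simp]: "q_fact q 0 = 1" unfolding q_fact_def by simp

lemma av_q_int: "av (q_int q n) \<le> 1"
  unfolding q_int_eq by (rule av_qint_nat)

lemma av_q_fact_le1: "av (q_fact q n) \<le> 1"
  by (induction n) (auto simp: q_fact_Suc intro!: mult_le_one av_q_int)

lemma av_q_fact_pos: "0 < av (q_fact q n)"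
  using q_fact_ne0 av_pos by blast

lemma q_int_add: "q_int q (m + j) = q_int q j + q ^ j * q_int q m"
  unfolding q_int_eq using qint_add[of "int j" "int m"] by (simp add: add.commute)

lemma q_fact_submult: "av (q_fact q (m + j)) \<le> av (q_fact q m) * av (q_fact q j)"
proof (induction "m + j" arbitrary: m j)
  case 0 then show ?case by simp
next
  case (Suc N)
  show ?case
  proof (cases "m = 0 \<or> j = 0")
    case True then show ?thesis by auto
  next
    case False
    then obtain m' j' where m: "m = Suc m'" and j: "j = Suc j'" by (metis not0_implies_Suc)
    have N: "N = m + j'" "N = m' + j" using Suc(2) m j by auto
    have "q_fact q (m + j) = q_fact q N * q_int q (m + j)"
      using Suc(2) q_fact_Suc[of N] by simp
    also have "\<dots> = q_fact q N * q_int q j + q ^ j * (q_fact q N * q_int q m)"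
      by (subst q_int_add) (simp add: algebra_simps)
    finally have eq: "q_fact q (m + j) = q_fact q N * q_int q j + q ^ j * (q_fact q N * q_int q m)" .
    have 1: "av (q_fact q N * q_int q j) \<le> av (q_fact q m) * av (q_fact q j)"
    proof -
      have "av (q_fact q N * q_int q j) = av (q_fact q (m + j')) * av (q_int q j)" using N by simp
      also have "\<dots> \<le> av (q_fact q m) * av (q_fact q j') * av (q_int q j)"
        using Suc(1)[OF N(1)] by (intro mult_right_mono) auto
      also have "\<dots> = av (q_fact q m) * av (q_fact q j)" using j q_fact_Suc[of j'] by simp
      finally show ?thesis .
    qed
    have 2: "av (q ^ j * (q_fact q N * q_int q m)) \<le> av (q_fact q m) * av (q_fact q j)"
    proof -
      have "av (q ^ j * (q_fact q N * q_int q m)) = av (q_fact q (m' + j)) * av (q_int q m)" using N by simp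
      also have "\<dots> \<le> av (q_fact q m') * av (q_fact q j) * av (q_int q m)"
        using Suc(1)[OF N(2)] by (intro mult_right_mono) auto
      also have "\<dots> = av (q_fact q m) * av (q_fact q j)" using m q_fact_Suc[of m'] by simp
      finally show ?thesis .
    qed
    show ?thesis unfolding eq using 1 2 by (rule av_add_le)
  qed
qed

lemma av_prod: "av (prod f S) = (\<Prod>i\<in>S. av (f i))"
  by (induction S rule: infinite_finite_induct) auto

lemma prod_qint_nat: "av (\<Prod>i=1..j. qint (int m + int i)) \<le> av (q_fact q j)"
proof -
  have "q_fact q (m + j) = q_fact q m * (\<Prod>i=1..j. qint (int m + int i))"
  proof (induction j)
    case (Suc j)
    have "q_fact q (m + Suc j) = q_fact q (m + j) * q_int q (Suc (m + j))"
      using q_fact_Suc by simp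
    also have "\<dots> = q_fact q m * (\<Prod>i=1..Suc j. qint (int m + int i))"
      using Suc by (simp add: prod.nat_ivl_Suc' q_int_eq algebra_simps)
    finally show ?case .
  qed simp
  then have "av (q_fact q m) * av (\<Prod>i=1..j. qint (int m + int i)) \<le> av (q_fact q m) * av (q_fact q j)"
    using q_fact_submult[of m j] by simp
  then show ?thesis using av_q_fact_pos[of m] by simp
qed

lemma prod_qint: "av (\<Prod>i=1..j. qint (n + int i)) \<le> av (q_fact q j)"
proof (cases "n \<ge> 0")
  case True
  then show ?thesis using prod_qint_nat[of "nat n" j] by simp
next
  case False
  show ?thesis
  proof (cases "n + int j \<ge> 0")
    case True
    have "nat (- n) \<in> {1..j}" using False True by auto
    moreover have "qint (n + int (nat (- n))) = 0" using False by simp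
    ultimately have "(\<Prod>i=1..j. qint (n + int i)) = 0" by (intro prod_zero) blast+
    then show ?thesis using av_q_fact_pos[of j] by (simp only: av_prod) simp
  next
    case False2: False
    define m where "m = nat (- (n + int j) - 1)"
    have mm: "int m = - (n + int j) - 1" unfolding m_def using False2 by simp
    have "av (\<Prod>i=1..j. qint (n + int i)) = (\<Prod>i=1..j. av (qint (n + int i)))" by (rule av_prod)
    also have "\<dots> = (\<Prod>i=1..j. av (qint (- (n + int i))))"
      by (intro prod.cong refl) (simp only: av_qint_neg)
    also have "\<dots> = (\<Prod>i=1..j. av (qint (- (n + int (j + 1 - i)))))"
      by (rule prod.atLeastAtMost_rev)
    also have "\<dots> = (\<Prod>i=1..j. av (qint (int m + int i)))"
    proof (rule prod.cong)
      fix i assume "i \<in> {1..j}"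
      then have "- (n + int (j + 1 - i)) = int m + int i" using mm by auto
      then show "av (qint (- (n + int (j + 1 - i)))) = av (qint (int m + int i))" by simp
    qed simp
    also have "\<dots> = av (\<Prod>i=1..j. qint (int m + int i))" by (rule av_prod[symmetric])
    also have "\<dots> \<le> av (q_fact q j)" by (rule prod_qint_nat)
    finally show ?thesis .
  qed
qed

section \<open>sigma and d\<close>

abbreviation sig where "sig \<equiv> sigma_q q"
abbreviation dq where "dq \<equiv> d_q q"

lemma EK_sig: "EK f \<Longrightarrow> EK (sig f)"
  unfolding sigma_q_def by (rule EK_cmult) simp

lemma gn_sig: "EK f \<Longrightarrow> gn (sig f) \<le> gn f"
  unfolding sigma_q_def by (rule gn_least) (simp add: gn_upper)

lemma dq_coef: "dq f i = qint (i + 1) * f (i + 1)"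
  unfolding d_q_def ls_divT_def sigma_q_def qint_def by (simp add: field_simps)

lemma dq_eq: "dq f = ls_divT (\<lambda>i. qint i * f i)"
  unfolding ls_divT_def by (rule ext) (simp add: dq_coef)

lemma EK_dq: "EK f \<Longrightarrow> EK (dq f)"
  unfolding dq_eq by (intro EK_divT EK_cmult av_qint)

lemma gn_dq: "EK f \<Longrightarrow> gn (dq f) \<le> gn f"
proof (rule gn_least)
  fix i assume f: "EK f"
  have "av (dq f i) = av (qint (i + 1)) * av (f (i + 1))" by (simp add: dq_coef)
  also have "\<dots> \<le> 1 * gn f" using av_qint gn_upper[OF f] by (intro mult_mono) auto
  finally show "av (dq f i) \<le> gn f" by simp
qed

lemma EK_sig_pow: "EK f \<Longrightarrow> EK ((sig ^^ k) f)"
  by (induction k) (auto intro: EK_sig)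
lemma EK_dq_pow: "EK f \<Longrightarrow> EK ((dq ^^ k) f)"
  by (induction k) (auto intro: EK_dq)

lemma gn_sig_pow: "EK f \<Longrightarrow> gn ((sig ^^ k) f) \<le> gn f"
proof (induction k)
  case (Suc k)
  then show ?case using gn_sig[OF EK_sig_pow[OF Suc(2), of k]] by simp
qed simp

lemma dq_pow_coef: "(dq ^^ j) f n = (\<Prod>i=1..j. qint (n + int i)) * f (n + int j)"
proof (induction j arbitrary: n)
  case (Suc j)
  have "(dq ^^ Suc j) f n = qint (n + 1) * ((dq ^^ j) f (n + 1))" by (simp add: dq_coef)
  also have "\<dots> = qint (n + 1) * ((\<Prod>i=1..j. qint (n + 1 + int i)) * f (n + 1 + int j))"
    using Suc by simp
  also have "\<dots> = (\<Prod>i=1..Suc j. qint (n + int i)) * f (n + int (Suc j))"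
  proof -
    have "(\<Prod>i=1..Suc j. qint (n + int i)) = qint (n + 1) * (\<Prod>i=1..j. qint (n + 1 + int i))"
    proof -
      have "(\<Prod>i=1..Suc j. qint (n + int i)) = qint (n + int 1) * (\<Prod>i=Suc 1..Suc j. qint (n + int i))"
        by (rule prod.atLeast_Suc_atMost) simp
      also have "(\<Prod>i=Suc 1..Suc j. qint (n + int i)) = (\<Prod>i=1..j. qint (n + int (Suc i)))"
        by (rule prod.shift_bounds_cl_Suc_ivl)
      finally show ?thesis by (simp add: algebra_simps)
    qed
    then show ?thesis by (simp add: algebra_simps)
  qed
  finally show ?case .
qed simp

lemma gn_dq_pow: "EK f \<Longrightarrow> gn ((dq ^^ j) f) \<le> av (q_fact q j) * gn f"
proof (rule gn_least)
  fix n assume f: "EK f"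
  have "av ((dq ^^ j) f n) = av (\<Prod>i=1..j. qint (n + int i)) * av (f (n + int j))"
    by (simp add: dq_pow_coef)
  also have "\<dots> \<le> av (q_fact q j) * gn f"
    using prod_qint gn_upper[OF f] by (intro mult_mono) auto
  finally show "av ((dq ^^ j) f n) \<le> av (q_fact q j) * gn f" .
qed

end


primrec cc :: "'a::field \<Rightarrow> nat \<Rightarrow> nat \<Rightarrow> 'a" where
  "cc q 0 k = (if k = 0 then 1 else 0)"
| "cc q (Suc t) k = q ^ k * cc q t k + (if k = 0 then 0 else cc q t (k - 1))"

lemma cc_zero: "t < k \<Longrightarrow> cc q t k = 0"
  by (induction t arbitrary: k) auto

context NAC
begin

lemma mul_add_right:
  assumes "EK a" "EK b" "EK c"
  shows "mul c (\<lambda>i. a i + b i) n = mul c a n + mul c b n"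
  using mul_add_left[OF assms, of n] mul_comm[OF assms(3) EK_add[OF assms(1,2)]]
    mul_comm[OF assms(3,1)] mul_comm[OF assms(3,2)] by simp

lemma mul_smult_right:
  assumes "EK a" "EK c"
  shows "mul c (\<lambda>i. k * a i) n = k * mul c a n"
  using mul_smult_left[OF assms, of k n] mul_comm[OF assms(2) EK_smult[OF assms(1)]]
    mul_comm[OF assms(2,1)] by simp

lemma mul_diff_left:
  assumes "EK a" "EK b" "EK c"
  shows "mul (\<lambda>i. a i - b i) c n = mul a c n - mul b c n"
proof -
  have "mul (\<lambda>i. a i + (-1) * b i) c n = mul a c n + mul (\<lambda>i. (-1) * b i) c n"
    by (rule mul_add_left) (use assms in \<open>auto intro: EK_smult EK_neg\<close>)
  also have "mul (\<lambda>i. (-1) * b i) c n = (-1) * mul b c n"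
    by (rule mul_smult_left) (use assms in auto)
  finally show ?thesis by simp
qed

lemma mul_diff_right:
  assumes "EK a" "EK b" "EK c"
  shows "mul c (\<lambda>i. a i - b i) n = mul c a n - mul c b n"
  using mul_diff_left[OF assms, of n] mul_comm[OF assms(3) EK_diff[OF assms(1,2)]]
    mul_comm[OF assms(3,1)] mul_comm[OF assms(3,2)] by simp

end

context QL
begin

lemma av_cc: "av (cc q t k) \<le> 1"
proof (induction t arbitrary: k)
  case (Suc t)
  have "av (q ^ k * cc q t k) \<le> 1" using Suc[of k] by simp
  moreover have "av (if k = 0 then 0 else cc q t (k - 1)) \<le> 1" using Suc[of "k - 1"] by simp
  ultimately show ?case by (simp only: cc.simps) (rule av_add_le)
qed simp

lemma sig_mul:
  assumes a: "EK a" and b: "EK b"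
  shows "sig (mul a b) = mul (sig a) (sig b)"
proof
  fix n
  have "usum_has (\<lambda>i. q powi n * (a i * b (n - i))) (q powi n * mul a b n)"
    by (rule usum_cmult[OF mul_usum[OF a b]])
  then have "usum_has (\<lambda>i. sig a i * sig b (n - i)) (q powi n * mul a b n)"
  proof (rule usum_cong)
    fix i
    have "q powi n = q powi i * q powi (n - i)" using q_ne0 by (simp add: power_int_add[symmetric])
    then show "q powi n * (a i * b (n - i)) = sig a i * sig b (n - i)"
      unfolding sigma_q_def by (simp add: algebra_simps)
  qed
  then show "sig (mul a b) n = mul (sig a) (sig b) n"
    using mul_eq[OF EK_sig[OF a] EK_sig[OF b]] unfolding sigma_q_def by simp
qed

abbreviation Del where "Del f \<equiv> (\<lambda>i. (sig f i - f i) / (q - 1))"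

lemma EK_Del: "EK f \<Longrightarrow> EK (Del f)"
proof -
  assume f: "EK f"
  have "Del f = (\<lambda>i. qint i * f i)" unfolding sigma_q_def qint_def by (auto simp: field_simps)
  then show ?thesis using EK_cmult[of qint, OF av_qint f] by simp
qed

lemma Del_eq: "Del f = (\<lambda>i. (1 / (q - 1)) * (sig f i - f i))" by simp

lemma Del_mul:
  assumes a: "EK a" and b: "EK b"
  shows "Del (mul a b) = (\<lambda>n. mul (sig a) (Del b) n + mul (Del a) b n)"
proof
  fix n
  let ?c = "1 / (q - 1)"
  have "mul (sig a) (Del b) n = mul (sig a) (\<lambda>i. ?c * (sig b i - b i)) n"
    by (simp only: Del_eq)
  also have "\<dots> = ?c * mul (sig a) (\<lambda>i. sig b i - b i) n"
    by (rule mul_smult_right[OF EK_diff[OF EK_sig[OF b] b] EK_sig[OF a]])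
  also have "mul (sig a) (\<lambda>i. sig b i - b i) n = mul (sig a) (sig b) n - mul (sig a) b n"
    by (rule mul_diff_right[OF EK_sig[OF b] b EK_sig[OF a]])
  finally have 1: "mul (sig a) (Del b) n = ?c * (mul (sig a) (sig b) n - mul (sig a) b n)" .
  have "mul (Del a) b n = mul (\<lambda>i. ?c * (sig a i - a i)) b n"
    by (simp only: Del_eq)
  also have "\<dots> = ?c * mul (\<lambda>i. sig a i - a i) b n"
    by (rule mul_smult_left[OF EK_diff[OF EK_sig[OF a] a] b])
  also have "mul (\<lambda>i. sig a i - a i) b n = mul (sig a) b n - mul a b n"
    by (rule mul_diff_left[OF EK_sig[OF a] a b])
  finally have 2: "mul (Del a) b n = ?c * (mul (sig a) b n - mul a b n)" .
  have 3: "sig (mul a b) n = mul (sig a) (sig b) n" using sig_mul[OF a b] by simp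
  have 4: "?c * (mul (sig a) (sig b) n - mul (sig a) b n) + ?c * (mul (sig a) b n - mul a b n)
      = ?c * (mul (sig a) (sig b) n - mul a b n)" by (simp add: algebra_simps)
  show "Del (mul a b) n = mul (sig a) (Del b) n + mul (Del a) b n"
    unfolding 1 2 4 3 by simp
qed

lemma dq_Del: "dq f = ls_divT (Del f)" unfolding d_q_def by simp

lemma dq_mul:
  assumes a: "EK a" and b: "EK b"
  shows "dq (mul a b) = (\<lambda>n. mul (sig a) (dq b) n + mul (dq a) b n)"
proof
  fix n
  have "dq (mul a b) n = Del (mul a b) (n + 1)" unfolding dq_Del ls_divT_def by simp
  also have "\<dots> = mul (sig a) (Del b) (n + 1) + mul (Del a) b (n + 1)" using Del_mul[OF a b] by metis
  also have "mul (Del a) b (n + 1) = ls_divT (mul (Del a) b) n" unfolding ls_divT_def by simp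
  also have "\<dots> = mul (dq a) b n" unfolding dq_Del by (rule mul_divT_left[OF EK_Del[OF a] b])
  also have "mul (sig a) (Del b) (n + 1) = ls_divT (mul (Del b) (sig a)) n"
    unfolding ls_divT_def using mul_comm[OF EK_sig[OF a] EK_Del[OF b]] by simp
  also have "\<dots> = mul (dq b) (sig a) n" unfolding dq_Del by (rule mul_divT_left[OF EK_Del[OF b] EK_sig[OF a]])
  also have "\<dots> = mul (sig a) (dq b) n" using mul_comm[OF EK_dq[OF b] EK_sig[OF a]] by simp
  finally show "dq (mul a b) n = mul (sig a) (dq b) n + mul (dq a) b n" .
qed

lemma dq_sig: "dq (sig h) = (\<lambda>n. q * sig (dq h) n)"
proof
  fix n
  have "q powi (n + 1) = q * q powi n" using q_ne0 by (simp add: power_int_add)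
  then show "dq (sig h) n = q * sig (dq h) n"
    unfolding sigma_q_def by (simp add: dq_coef algebra_simps)
qed

lemma sig_smult: "sig (\<lambda>i. c * f i) = (\<lambda>i. c * sig f i)"
  unfolding sigma_q_def by (simp add: algebra_simps)

lemma dq_smult: "dq (\<lambda>i. c * f i) = (\<lambda>i. c * dq f i)"
  by (rule ext) (simp add: dq_coef algebra_simps)

lemma dq_sig_pow: "dq ((sig ^^ k) h) = (\<lambda>n. q ^ k * (sig ^^ k) (dq h) n)"
proof (induction k)
  case (Suc k)
  have "dq ((sig ^^ Suc k) h) = (\<lambda>n. q * sig (dq ((sig ^^ k) h)) n)" by (simp add: dq_sig)
  also have "\<dots> = (\<lambda>n. q * sig (\<lambda>n. q ^ k * (sig ^^ k) (dq h) n) n)" using Suc by simp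
  also have "\<dots> = (\<lambda>n. q ^ Suc k * (sig ^^ Suc k) (dq h) n)" by (simp add: sig_smult mult.assoc)
  finally show ?case .
qed simp

end

locale QLG = QL +
  fixes g :: "int \<Rightarrow> 'a"
  assumes gE: "EK g" and gnorm: "gn g \<le> 1"
begin

abbreviation G where "G \<equiv> ls_divT g"
abbreviation gb where "gb \<equiv> g_br av q g"
definition Dop where "Dop f = ls_add (dq f) (mul (sig f) G)"

declare g_br.simps(2)[simp del]

lemma EK_G: "EK G" using EK_divT[OF gE] .
lemma gn_G: "gn G \<le> 1" using gn_divT[OF gE] gnorm by linarith

lemma gb_Suc: "gb (Suc s) = Dop (gb s)" unfolding Dop_def by (simp add: g_br.simps(2))

lemma EK_Dop: "EK f \<Longrightarrow> EK (Dop f)"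
  unfolding Dop_def by (intro EK_ls_add EK_dq EK_mul EK_sig EK_G)

lemma gn_Dop: assumes f: "EK f" shows "gn (Dop f) \<le> gn f"
proof -
  have "gn (mul (sig f) G) \<le> gn (sig f) * gn G" by (rule gn_mul[OF EK_sig[OF f] EK_G])
  also have "\<dots> \<le> gn f * 1"
    using gn_sig[OF f] gn_G gn_nonneg[OF EK_sig[OF f]] gn_nonneg[OF EK_G] by (intro mult_mono) auto
  finally have 1: "gn (mul (sig f) G) \<le> gn f" by simp
  have "gn (Dop f) \<le> max (gn (dq f)) (gn (mul (sig f) G))"
    unfolding Dop_def ls_add_def by (rule gn_add[OF EK_dq[OF f] EK_mul[OF EK_sig[OF f] EK_G]])
  then show ?thesis using 1 gn_dq[OF f] by linarith
qed

lemma EK_gb: "EK (gb s)"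
  by (induction s) (auto simp: gb_Suc EK_one intro: EK_Dop)

lemma gn_gb: "gn (gb s) \<le> 1"
proof (induction s)
  case 0 then show ?case using gn_one by simp
next
  case (Suc s) then show ?case using gn_Dop[OF EK_gb[of s]] by (simp add: gb_Suc)
qed

lemma gb_add: "gb (s + t) = (Dop ^^ t) (gb s)"
  by (induction t) (auto simp: gb_Suc)

lemma Dop_mul:
  assumes x: "EK x" and y: "EK y"
  shows "Dop (mul x y) = (\<lambda>n. mul (dq x) y n + mul (sig x) (Dop y) n)"
proof
  fix n
  have "Dop (mul x y) n = mul (sig x) (dq y) n + mul (dq x) y n + mul (sig (mul x y)) G n"
    unfolding Dop_def ls_add_def using dq_mul[OF x y] by simp
  also have "mul (sig (mul x y)) G n = mul (sig x) (mul (sig y) G) n"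
    using sig_mul[OF x y] mul_assoc[OF EK_sig[OF x] EK_sig[OF y] EK_G] by simp
  also have "mul (sig x) (dq y) n + mul (dq x) y n + mul (sig x) (mul (sig y) G) n
      = mul (dq x) y n + mul (sig x) (\<lambda>i. dq y i + mul (sig y) G i) n"
    using mul_add_right[OF EK_dq[OF y] EK_mul[OF EK_sig[OF y] EK_G] EK_sig[OF x]]
    by (simp add: algebra_simps)
  finally show "Dop (mul x y) n = mul (dq x) y n + mul (sig x) (Dop y) n"
    unfolding Dop_def ls_add_def .
qed

lemma Dop_sum:
  assumes "\<And>k. k \<in> S \<Longrightarrow> EK (X k)"
  shows "Dop (\<lambda>i. \<Sum>k\<in>S. c k * X k i) = (\<lambda>n. \<Sum>k\<in>S. c k * Dop (X k) n)"
proof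
  fix n
  have EKs: "\<And>k. k \<in> S \<Longrightarrow> EK (\<lambda>i. c k * sig (X k) i)" using assms by (intro EK_smult EK_sig)
  have 1: "dq (\<lambda>i. \<Sum>k\<in>S. c k * X k i) n = (\<Sum>k\<in>S. c k * dq (X k) n)"
    by (simp add: dq_coef sum_distrib_left mult.left_commute)
  have 2: "sig (\<lambda>i. \<Sum>k\<in>S. c k * X k i) = (\<lambda>i. \<Sum>k\<in>S. c k * sig (X k) i)"
    unfolding sigma_q_def by (simp add: sum_distrib_left algebra_simps)
  have 3: "mul (\<lambda>i. \<Sum>k\<in>S. c k * sig (X k) i) G n = (\<Sum>k\<in>S. c k * mul (sig (X k)) G n)"
  proof -
    have "mul (\<lambda>i. \<Sum>k\<in>S. c k * sig (X k) i) G n = (\<Sum>k\<in>S. mul (\<lambda>i. c k * sig (X k) i) G n)"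
      by (rule mul_sum_left[OF EKs EK_G])
    also have "\<dots> = (\<Sum>k\<in>S. c k * mul (sig (X k)) G n)"
      by (rule sum.cong[OF refl], rule mul_smult_left[OF EK_sig[OF assms] EK_G])
    finally show ?thesis .
  qed
  show "Dop (\<lambda>i. \<Sum>k\<in>S. c k * X k i) n = (\<Sum>k\<in>S. c k * Dop (X k) n)"
    unfolding Dop_def ls_add_def using 1 2 3 by (simp add: algebra_simps sum.distrib)
qed

definition Rep where
  "Rep f t = (\<lambda>n. \<Sum>k\<le>t. cc q t k * mul ((sig ^^ k) ((dq ^^ (t - k)) f)) (gb k) n)"

lemma EK_Y: "EK f \<Longrightarrow> EK ((sig ^^ k) ((dq ^^ j) f))"
  by (intro EK_sig_pow EK_dq_pow)

lemma Dop_pow_rep: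
  assumes f: "EK f"
  shows "(Dop ^^ t) f = Rep f t"
proof (induction t)
  case 0
  show ?case unfolding Rep_def by (rule ext) (simp add: mul_one_right[OF f])
next
  case (Suc t)
  have "(Dop ^^ Suc t) f = Dop (Rep f t)" using Suc by simp
  also have "\<dots> = (\<lambda>n. \<Sum>k\<le>t. cc q t k * Dop (mul ((sig ^^ k) ((dq ^^ (t - k)) f)) (gb k)) n)"
    unfolding Rep_def by (rule Dop_sum) (intro EK_mul EK_Y f EK_gb)
  also have "\<dots> = Rep f (Suc t)"
  proof
    fix n
    define M where "M k j = mul ((sig ^^ k) ((dq ^^ j) f)) (gb k) n" for k j
    have trm: "Dop (mul ((sig ^^ k) ((dq ^^ (t - k)) f)) (gb k)) n
        = q ^ k * M k (Suc t - k) + M (Suc k) (t - k)" if "k \<le> t" for k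
    proof -
      have "Dop (mul ((sig ^^ k) ((dq ^^ (t - k)) f)) (gb k)) n
          = mul (dq ((sig ^^ k) ((dq ^^ (t - k)) f))) (gb k) n
            + mul (sig ((sig ^^ k) ((dq ^^ (t - k)) f))) (Dop (gb k)) n"
        using Dop_mul[OF EK_Y[OF f] EK_gb] by metis
      also have "dq ((sig ^^ k) ((dq ^^ (t - k)) f)) = (\<lambda>n. q ^ k * (sig ^^ k) ((dq ^^ (Suc t - k)) f) n)"
        using that by (simp add: dq_sig_pow Suc_diff_le)
      also have "mul (\<lambda>n. q ^ k * (sig ^^ k) ((dq ^^ (Suc t - k)) f) n) (gb k) n = q ^ k * M k (Suc t - k)"
        unfolding M_def by (rule mul_smult_left[OF EK_Y[OF f] EK_gb])
      also have "mul (sig ((sig ^^ k) ((dq ^^ (t - k)) f))) (Dop (gb k)) n = M (Suc k) (t - k)"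
        unfolding M_def by (simp add: gb_Suc)
      finally show ?thesis .
    qed
    have "(\<Sum>k\<le>t. cc q t k * Dop (mul ((sig ^^ k) ((dq ^^ (t - k)) f)) (gb k)) n)
        = (\<Sum>k\<le>t. cc q t k * (q ^ k * M k (Suc t - k) + M (Suc k) (t - k)))"
      using trm by (intro sum.cong) auto
    also have "\<dots> = (\<Sum>k\<le>t. q ^ k * cc q t k * M k (Suc t - k)) + (\<Sum>k\<le>t. cc q t k * M (Suc k) (t - k))"
      by (simp add: sum.distrib algebra_simps)
    also have "(\<Sum>k\<le>t. q ^ k * cc q t k * M k (Suc t - k)) = (\<Sum>k\<le>Suc t. q ^ k * cc q t k * M k (Suc t - k))"
      using cc_zero[of t "Suc t" q] by simp
    also have "(\<Sum>k\<le>t. cc q t k * M (Suc k) (t - k))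
        = (\<Sum>k\<le>Suc t. (if k = 0 then 0 else cc q t (k - 1)) * M k (Suc t - k))"
      by (subst sum.atMost_Suc_shift) simp
    also have "(\<Sum>k\<le>Suc t. q ^ k * cc q t k * M k (Suc t - k)) + (\<Sum>k\<le>Suc t. (if k = 0 then 0 else cc q t (k - 1)) * M k (Suc t - k))
        = (\<Sum>k\<le>Suc t. cc q (Suc t) k * M k (Suc t - k))"
      by (simp add: sum.distrib[symmetric] algebra_simps)
    finally show "(\<Sum>k\<le>t. cc q t k * Dop (mul ((sig ^^ k) ((dq ^^ (t - k)) f)) (gb k)) n) = Rep f (Suc t) n"
      unfolding Rep_def M_def .
  qed
  finally show ?case .
qed

lemma gn_Dop_pow:
  assumes f: "EK f" and M: "0 \<le> M" and bd: "\<And>k. k \<le> t \<Longrightarrow> av (q_fact q (t - k)) * gn f * gn (gb k) \<le> M"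
  shows "gn ((Dop ^^ t) f) \<le> M"
  unfolding Dop_pow_rep[OF f]
proof (rule gn_least)
  fix n
  show "av (Rep f t n) \<le> M" unfolding Rep_def
  proof (rule av_sum_le[OF _ M])
    fix k assume k: "k \<in> {..t}"
    have "av (cc q t k * mul ((sig ^^ k) ((dq ^^ (t - k)) f)) (gb k) n)
        \<le> av (mul ((sig ^^ k) ((dq ^^ (t - k)) f)) (gb k) n)"
      unfolding av_mult by (rule mult_left_le_one_le) (auto simp: av_cc)
    also have "\<dots> \<le> gn (mul ((sig ^^ k) ((dq ^^ (t - k)) f)) (gb k))"
      by (simp add: gn_upper EK_mul EK_Y f EK_gb)
    also have "\<dots> \<le> gn ((sig ^^ k) ((dq ^^ (t - k)) f)) * gn (gb k)"
      by (rule gn_mul[OF EK_Y[OF f] EK_gb])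
    also have "\<dots> \<le> (av (q_fact q (t - k)) * gn f) * gn (gb k)"
    proof (rule mult_right_mono)
      show "gn ((sig ^^ k) ((dq ^^ (t - k)) f)) \<le> av (q_fact q (t - k)) * gn f"
        using gn_sig_pow[OF EK_dq_pow[OF f], of k "t - k"] gn_dq_pow[OF f, of "t - k"] by linarith
    qed (rule gn_nonneg[OF EK_gb])
    also have "\<dots> \<le> M" using bd k by simp
    finally show "av (cc q t k * mul ((sig ^^ k) ((dq ^^ (t - k)) f)) (gb k) n) \<le> M" .
  qed
qed

end


context NA
begin

lemma av_one_of_le: "av (x - 1) < 1 \<Longrightarrow> av x = 1"
proof -
  assume "av (x - 1) < 1"
  then have "av ((x - 1) + 1) = av 1" by (intro av_add_strict) simp
  then show ?thesis by simp
qed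

lemma pow_sub1_bound:
  assumes "av (x - 1) < 1"
  shows "av (x ^ n - 1) \<le> av (x - 1)"
proof -
  have ax: "av x = 1" using av_one_of_le[OF assms] .
  have "x ^ n - 1 = (x - 1) * (\<Sum>i<n. x ^ i)" by (rule power_diff_1_eq)
  moreover have "av (\<Sum>i<n. x ^ i) \<le> 1" by (rule av_sum_le) (auto simp: ax)
  ultimately show ?thesis by (simp only: av_mult) (rule mult_right_le_one_le, auto)
qed

end

locale NAP = NA +
  fixes p :: nat
  assumes pp: "prime p" and avp: "av (of_nat p) < 1"
begin

lemma p_ge2: "p \<ge> 2" using pp prime_ge_2_nat by blast
lemma avp_pos: "0 < av (of_nat p)" using p_ge2 by (intro av_pos) auto

lemma av_nat_pos: "m > 0 \<Longrightarrow> 0 < av (of_nat m)" by (intro av_pos) auto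

lemma av_nat_coprime:
  assumes "\<not> p dvd m"
  shows "av (of_nat m) = 1"
proof -
  have m0: "m \<noteq> 0" using assms by (metis dvd_0_right)
  have "coprime p m" using prime_imp_coprime[OF pp assms] .
  then have g: "gcd m p = 1" by (simp add: coprime_iff_gcd_eq_1 gcd.commute)
  obtain x y where "m * x = p * y + gcd m p" using bezout_nat[OF m0, of p] by blast
  then have "m * x = p * y + 1" using g by simp
  then have "(of_nat (m * x) :: 'a) = of_nat (p * y + 1)" by simp
  then have e: "(1 :: 'a) = of_nat m * of_nat x - of_nat p * of_nat y" by simp
  have "1 \<le> max (av (of_nat m * of_nat x :: 'a)) (av (of_nat p * of_nat y :: 'a))"
    using av_diff[of "of_nat m * of_nat x :: 'a" "of_nat p * of_nat y"] e by (metis av_1)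
  moreover have "av (of_nat m * of_nat x :: 'a) \<le> av (of_nat m :: 'a)"
    using av_of_nat_le[of x] by (simp add: mult_right_le_one_le)
  moreover have "av (of_nat p * of_nat y :: 'a) < 1"
  proof -
    have "av (of_nat p * of_nat y :: 'a) = av (of_nat p :: 'a) * av (of_nat y :: 'a)" by simp
    also have "\<dots> \<le> av (of_nat p :: 'a)" by (rule mult_right_le_one_le) (auto simp: av_of_nat_le)
    finally show ?thesis using avp by linarith
  qed
  ultimately have "1 \<le> av (of_nat m :: 'a)" by linarith
  then show ?thesis using av_of_nat_le[of m] by linarith
qed

lemma prod_av_split: "(\<Prod>j=1..n. av (of_nat j :: 'a)) = av (of_nat p :: 'a) ^ (n div p) * (\<Prod>j=1..n div p. av (of_nat j :: 'a))"
proof (induction n)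
  case (Suc n)
  show ?case
  proof (cases "p dvd Suc n")
    case False
    then have "Suc n mod p \<noteq> 0" by (simp add: dvd_eq_mod_eq_0)
    then have d: "Suc n div p = n div p" by (simp add: div_Suc)
    have "(\<Prod>j=1..Suc n. av (of_nat j :: 'a)) = (\<Prod>j=1..n. av (of_nat j :: 'a)) * av (of_nat (Suc n) :: 'a)"
      by (simp add: prod.nat_ivl_Suc')
    also have "av (of_nat (Suc n) :: 'a) = 1" using av_nat_coprime[OF False] .
    finally show ?thesis using Suc d by simp
  next
    case True
    then obtain i where i: "Suc n = p * i" by blast
    then have i0: "i > 0" by (cases i) auto
    have d: "Suc n div p = i" using i p_ge2 by simp
    have d2: "n div p = i - 1"
    proof -
      have e: "n = (p - 1) + p * (i - 1)" using i i0 p_ge2 by (cases i) (auto simp: algebra_simps)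
      have "n div p = (p - 1) div p + (i - 1)" unfolding e using p_ge2 by (subst div_mult_self2) auto
      then show ?thesis using p_ge2 by simp
    qed
    have "(\<Prod>j=1..Suc n. av (of_nat j :: 'a)) = (\<Prod>j=1..n. av (of_nat j :: 'a)) * av (of_nat (Suc n) :: 'a)"
      by (simp add: prod.nat_ivl_Suc')
    also have "av (of_nat (Suc n) :: 'a) = av (of_nat p :: 'a) * av (of_nat i :: 'a)" using i by simp
    also have "(\<Prod>j=1..n. av (of_nat j :: 'a)) = av (of_nat p :: 'a) ^ (i - 1) * (\<Prod>j=1..i - 1. av (of_nat j :: 'a))"
      using Suc d2 by simp
    also have "av (of_nat p :: 'a) ^ (i - 1) * (\<Prod>j=1..i - 1. av (of_nat j :: 'a)) * (av (of_nat p :: 'a) * av (of_nat i :: 'a))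
        = av (of_nat p :: 'a) ^ i * (\<Prod>j=1..i. av (of_nat j :: 'a))"
    proof -
      have "(\<Prod>j=1..i. av (of_nat j :: 'a)) = (\<Prod>j=1..i-1. av (of_nat j :: 'a)) * av (of_nat i :: 'a)"
        using i0 prod.nat_ivl_Suc'[of 1 "i - 1" "\<lambda>j. av (of_nat j :: 'a)"] by (simp add: mult.commute)
      moreover have "av (of_nat p :: 'a) ^ i = av (of_nat p :: 'a) ^ (i - 1) * av (of_nat p :: 'a)"
        using i0 by (metis Suc_diff_1 power_Suc2)
      ultimately show ?thesis by (simp add: algebra_simps)
    qed
    finally show ?thesis using d by simp
  qed
qed simp

lemma prod_av_lower: "av (of_nat p :: 'a) ^ n \<le> (\<Prod>j=1..n. av (of_nat j :: 'a))"
proof (induction n rule: less_induct)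
  case (less n)
  show ?case
  proof (cases "n = 0")
    case True then show ?thesis by simp
  next
    case False
    then have lt: "n div p < n" using p_ge2 by simp
    have "av (of_nat p :: 'a) ^ n \<le> av (of_nat p :: 'a) ^ (n div p + n div p)"
    proof (rule power_decreasing)
      have "n div p * 2 \<le> n div p * p" using p_ge2 by simp
      also have "\<dots> \<le> n" by simp
      finally show "n div p + n div p \<le> n" by simp
    qed (use avp in auto)
    also have "\<dots> = av (of_nat p :: 'a) ^ (n div p) * av (of_nat p :: 'a) ^ (n div p)" by (simp add: power_add)
    also have "\<dots> \<le> av (of_nat p :: 'a) ^ (n div p) * (\<Prod>j=1..n div p. av (of_nat j :: 'a))"
      by (intro mult_left_mono less(1)[OF lt]) auto
    also have "\<dots> = (\<Prod>j=1..n. av (of_nat j :: 'a))" by (rule prod_av_split[symmetric])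
    finally show ?thesis .
  qed
qed

lemma av_choose_p: "0 < k \<Longrightarrow> k < p \<Longrightarrow> av (of_nat (p choose k) :: 'a) \<le> av (of_nat p :: 'a)"
proof -
  assume k: "0 < k" "k < p"
  have "p dvd (p choose k)" by (rule dvd_choose_prime) (use k pp in auto)
  then obtain c where c: "p choose k = p * c" by blast
  have "av (of_nat (p choose k) :: 'a) = av (of_nat p :: 'a) * av (of_nat c :: 'a)" unfolding c by simp
  also have "\<dots> \<le> av (of_nat p :: 'a)" by (rule mult_right_le_one_le) (auto simp: av_of_nat_le)
  finally show ?thesis .
qed

lemma binom_p:
  assumes y1: "av (x - 1) < 1"
  shows "av (x ^ p - 1 - of_nat p * (x - 1)) \<le> av (x - 1) * max (av (of_nat p :: 'a) * av (x - 1)) (av (x - 1) ^ (p - 1))"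
proof -
  define y where "y = x - 1"
  have x: "x = y + 1" unfolding y_def by simp
  have "x ^ p = (\<Sum>k\<le>p. of_nat (p choose k) * y ^ k * 1 ^ (p - k))"
    unfolding x by (rule binomial_ring)
  also have "{..p} = insert 0 (insert 1 {2..p})" using p_ge2 by auto
  also have "(\<Sum>k\<in>insert 0 (insert 1 {2..p}). of_nat (p choose k) * y ^ k * 1 ^ (p - k))
      = 1 + (of_nat p * y + (\<Sum>k\<in>{2..p}. of_nat (p choose k) * y ^ k))"
    by (subst sum.insert, simp, simp, subst sum.insert, simp, simp) simp
  finally have e: "x ^ p - 1 - of_nat p * y = (\<Sum>k\<in>{2..p}. of_nat (p choose k) * y ^ k)"
    by simp
  have yx: "x - 1 = y" unfolding y_def ..
  have ay: "av y < 1" using y1 unfolding y_def .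
  show ?thesis unfolding yx e
  proof (rule av_sum_le)
    fix k assume k: "k \<in> {2..p}"
    show "av (of_nat (p choose k) * y ^ k) \<le> av y * max (av (of_nat p :: 'a) * av y) (av y ^ (p - 1))"
    proof (cases "k = p")
      case True
      have "av (of_nat (p choose k) * y ^ k) = av y * av y ^ (p - 1)"
        using True p_ge2 by (simp add: power_Suc[symmetric])
      also have "\<dots> \<le> av y * max (av (of_nat p :: 'a) * av y) (av y ^ (p - 1))"
        by (intro mult_left_mono) auto
      finally show ?thesis .
    next
      case False
      then have kp: "0 < k" "k < p" using k by auto
      have kk: "k = Suc (Suc (k - 2))" using k by auto
      have "av y ^ k = av y * av y * av y ^ (k - 2)"
        by (subst kk) (simp only: power_Suc mult.assoc)
      then have "av (of_nat (p choose k) * y ^ k) = av (of_nat (p choose k) :: 'a) * (av y * av y * av y ^ (k - 2))"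
        by simp
      also have "\<dots> \<le> av (of_nat p :: 'a) * (av y * av y * 1)"
        using av_choose_p[OF kp] ay by (intro mult_mono mult_left_mono power_le_one) auto
      also have "\<dots> = av y * (av (of_nat p :: 'a) * av y)" by simp
      also have "\<dots> \<le> av y * max (av (of_nat p :: 'a) * av y) (av y ^ (p - 1))"
        by (intro mult_left_mono) auto
      finally show ?thesis .
    qed
  qed (intro mult_nonneg_nonneg, auto simp: le_max_iff_disj)
qed

lemma pow_p_strict:
  assumes y1: "av (x - 1) < 1" and g: "av (x - 1) ^ (p - 1) < av (of_nat p :: 'a)" and x1: "x \<noteq> 1"
  shows "av (x ^ p - 1) = av (of_nat p :: 'a) * av (x - 1)"
proof -
  have ypos: "0 < av (x - 1)" using x1 by (intro av_pos) simp
  have m: "max (av (of_nat p :: 'a) * av (x - 1)) (av (x - 1) ^ (p - 1)) < av (of_nat p :: 'a)"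
  proof -
    have "av (of_nat p :: 'a) * av (x - 1) < av (of_nat p :: 'a) * 1"
      using avp_pos y1 by (intro mult_strict_left_mono) auto
    then show ?thesis using g by simp
  qed
  have "av (x ^ p - 1 - of_nat p * (x - 1)) < av (of_nat p * (x - 1))"
  proof -
    have "av (x ^ p - 1 - of_nat p * (x - 1)) \<le> av (x - 1) * max (av (of_nat p :: 'a) * av (x - 1)) (av (x - 1) ^ (p - 1))"
      by (rule binom_p[OF y1])
    also have "\<dots> < av (x - 1) * av (of_nat p :: 'a)" using m ypos by (intro mult_strict_left_mono) auto
    finally show ?thesis by (simp add: mult.commute)
  qed
  then have "av ((x ^ p - 1 - of_nat p * (x - 1)) + of_nat p * (x - 1)) = av (of_nat p * (x - 1))"
    by (rule av_add_strict)
  then show ?thesis by simp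
qed

lemma pow_p_contract:
  assumes y1: "av (x - 1) \<le> r" "r < 1"
  shows "av (x ^ p - 1) \<le> av (x - 1) * max (av (of_nat p :: 'a)) (r ^ (p - 1))"
proof -
  have ylt: "av (x - 1) < 1" using y1 by linarith
  have 1: "av (x ^ p - 1 - of_nat p * (x - 1)) \<le> av (x - 1) * max (av (of_nat p :: 'a)) (r ^ (p - 1))"
  proof -
    have "av (x ^ p - 1 - of_nat p * (x - 1)) \<le> av (x - 1) * max (av (of_nat p :: 'a) * av (x - 1)) (av (x - 1) ^ (p - 1))"
      by (rule binom_p[OF ylt])
    also have "\<dots> \<le> av (x - 1) * max (av (of_nat p :: 'a)) (r ^ (p - 1))"
    proof (intro mult_left_mono)
      have "av (of_nat p :: 'a) * av (x - 1) \<le> av (of_nat p :: 'a)"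
        using ylt by (intro mult_right_le_one_le) auto
      moreover have "av (x - 1) ^ (p - 1) \<le> r ^ (p - 1)" using y1 by (intro power_mono) auto
      ultimately show "max (av (of_nat p :: 'a) * av (x - 1)) (av (x - 1) ^ (p - 1)) \<le> max (av (of_nat p :: 'a)) (r ^ (p - 1))"
        by (auto simp: max_def)
    qed auto
    finally show ?thesis .
  qed
  have 2: "av (of_nat p * (x - 1)) \<le> av (x - 1) * max (av (of_nat p :: 'a)) (r ^ (p - 1))"
  proof -
    have "av (of_nat p :: 'a) \<le> max (av (of_nat p :: 'a)) (r ^ (p - 1))" by simp
    then have "av (x - 1) * av (of_nat p :: 'a) \<le> av (x - 1) * max (av (of_nat p :: 'a)) (r ^ (p - 1))"
      by (rule mult_left_mono) simp
    then show ?thesis by (simp add: mult.commute)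
  qed
  have "x ^ p - 1 = (x ^ p - 1 - of_nat p * (x - 1)) + of_nat p * (x - 1)" by simp
  then show ?thesis using av_add_le[OF 1 2] by simp
qed

lemma pow_coprime:
  assumes y1: "av (x - 1) < 1" and m: "\<not> p dvd m"
  shows "av (x ^ m - 1) = av (x - 1)"
proof -
  have ax: "av x = 1" using av_one_of_le[OF y1] .
  have "x ^ m - 1 = (x - 1) * (\<Sum>i<m. x ^ i)" by (rule power_diff_1_eq)
  moreover have "av (\<Sum>i<m. x ^ i) = 1"
  proof -
    have "(\<Sum>i<m. x ^ i) = (\<Sum>i<m. x ^ i - 1) + of_nat m" by (simp add: sum_subtractf)
    moreover have "av (\<Sum>i<m. x ^ i - 1) < av (of_nat m :: 'a)"
    proof -
      have "av (\<Sum>i<m. x ^ i - 1) \<le> av (x - 1)" by (rule av_sum_le) (auto intro: pow_sub1_bound[OF y1])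
      then show ?thesis using y1 av_nat_coprime[OF m] by linarith
    qed
    ultimately show ?thesis using av_add_strict av_nat_coprime[OF m] by metis
  qed
  ultimately show ?thesis by simp
qed

lemma good_pow:
  assumes y1: "av (x - 1) < 1" and g: "av (x - 1) ^ (p - 1) < av (of_nat p :: 'a)" and x1: "x \<noteq> 1"
    and j: "j > 0"
  shows "av (x ^ j - 1) = av (of_nat j :: 'a) * av (x - 1)"
  using j
proof (induction j rule: less_induct)
  case (less j)
  show ?case
  proof (cases "p dvd j")
    case False
    then show ?thesis using pow_coprime[OF y1 False] av_nat_coprime[OF False] by simp
  next
    case True
    then obtain i where i: "j = p * i" by blast
    have i0: "0 < i" using less(2) i by (cases i) auto
    have ij: "i < j" using i i0 p_ge2 by simp
    have IH: "av (x ^ i - 1) = av (of_nat i :: 'a) * av (x - 1)" using less(1)[OF ij i0] .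
    have le: "av (x ^ i - 1) \<le> av (x - 1)" using IH av_of_nat_le[of i]
      by (simp add: mult_left_le_one_le)
    have y1': "av (x ^ i - 1) < 1" using le y1 by linarith
    have g': "av (x ^ i - 1) ^ (p - 1) < av (of_nat p :: 'a)"
      using power_mono[OF le, of "p - 1"] g by simp
    have x1': "x ^ i \<noteq> 1"
    proof
      assume "x ^ i = 1"
      then have "av (of_nat i :: 'a) * av (x - 1) = 0" using IH by simp
      moreover have "0 < av (of_nat i :: 'a)" using i0 by (rule av_nat_pos)
      moreover have "0 < av (x - 1)" using x1 by (intro av_pos) simp
      ultimately show False using i0 x1 by auto
    qed
    have "av ((x ^ i) ^ p - 1) = av (of_nat p :: 'a) * av (x ^ i - 1)" by (rule pow_p_strict[OF y1' g' x1'])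
    moreover have "x ^ j = (x ^ i) ^ p" unfolding i by (simp add: power_mult mult.commute)
    ultimately show ?thesis using IH i by simp
  qed
qed

end

locale QLP = QL + NAP
begin

lemma theta_lt1: "max (av (of_nat p :: 'a)) (av (q - 1) ^ (p - 1)) < 1"
proof -
  have "av (q - 1) ^ (p - 1) \<le> av (q - 1) ^ 1" using q1 p_ge2 by (intro power_decreasing) auto
  then have "av (q - 1) ^ (p - 1) < 1" using q1 by simp
  then show ?thesis using avp by simp
qed

lemma e_bound: "av (q ^ (p ^ k) - 1) \<le> av (q - 1) * max (av (of_nat p :: 'a)) (av (q - 1) ^ (p - 1)) ^ k"
proof (induction k)
  case 0 then show ?case by simp
next
  case (Suc k)
  let ?th = "max (av (of_nat p :: 'a)) (av (q - 1) ^ (p - 1))"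
  have th0: "0 \<le> ?th" by (simp add: le_max_iff_disj)
  have le: "av (q ^ (p ^ k) - 1) \<le> av (q - 1)" by (rule pow_sub1_bound[OF q1])
  have "q ^ (p ^ Suc k) = (q ^ (p ^ k)) ^ p" by (simp only: power_Suc2 power_mult)
  then have "av (q ^ (p ^ Suc k) - 1) \<le> av (q ^ (p ^ k) - 1) * ?th"
    using pow_p_contract[OF le q1] by simp
  also have "\<dots> \<le> av (q - 1) * ?th ^ k * ?th" using Suc th0 by (intro mult_right_mono) auto
  also have "\<dots> = av (q - 1) * ?th ^ Suc k" by (simp add: algebra_simps)
  finally show ?case .
qed

lemma exists_K: "\<exists>K. av (q ^ (p ^ K) - 1) < av (of_nat p :: 'a)"
proof -
  let ?th = "max (av (of_nat p :: 'a)) (av (q - 1) ^ (p - 1))"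
  obtain K where K: "?th ^ K < av (of_nat p :: 'a)"
    using real_arch_pow_inv[OF avp_pos theta_lt1] by blast
  have "av (q ^ (p ^ K) - 1) \<le> av (q - 1) * ?th ^ K" by (rule e_bound)
  also have "\<dots> \<le> 1 * ?th ^ K" using q1 by (intro mult_right_mono) (auto simp: le_max_iff_disj)
  finally have "av (q ^ (p ^ K) - 1) \<le> ?th ^ K" by simp
  then show ?thesis using K by (intro exI[of _ K]) linarith
qed

definition K0 where "K0 = (SOME K. av (q ^ (p ^ K) - 1) < av (of_nat p :: 'a))"
definition Q0 where "Q0 = q ^ (p ^ K0)"

lemma Q0_small: "av (Q0 - 1) < av (of_nat p :: 'a)"
  unfolding Q0_def K0_def using exists_K by (rule someI_ex)

lemma Q0_ne1: "Q0 \<noteq> 1"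
  unfolding Q0_def using qnr p_ge2 by auto

lemma Q0_lt1: "av (Q0 - 1) < 1" using Q0_small avp by linarith

lemma Q0_good: "av (Q0 - 1) ^ (p - 1) < av (of_nat p :: 'a)"
proof -
  have "av (Q0 - 1) ^ (p - 1) \<le> av (Q0 - 1) ^ 1"
    using Q0_lt1 p_ge2 by (intro power_decreasing) auto
  then show ?thesis using Q0_small by simp
qed

lemma Q0_pos: "0 < av (Q0 - 1)" using Q0_ne1 by (intro av_pos) simp

lemma qpow_lower: "j > 0 \<Longrightarrow> av (of_nat j :: 'a) * av (Q0 - 1) \<le> av (q ^ j - 1)"
proof -
  assume j: "j > 0"
  have "av (of_nat j :: 'a) * av (Q0 - 1) = av (Q0 ^ j - 1)"
    using good_pow[OF Q0_lt1 Q0_good Q0_ne1 j] by simp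
  also have "Q0 ^ j = (q ^ j) ^ (p ^ K0)" unfolding Q0_def by (simp add: power_mult[symmetric] mult.commute)
  also have "av ((q ^ j) ^ (p ^ K0) - 1) \<le> av (q ^ j - 1)"
  proof -
    have "(q ^ j) ^ (p ^ K0) - 1 = (q ^ j - 1) * (\<Sum>i<p ^ K0. (q ^ j) ^ i)" by (rule power_diff_1_eq)
    moreover have "av (\<Sum>i<p ^ K0. (q ^ j) ^ i) \<le> 1" by (rule av_sum_le) auto
    ultimately show ?thesis by (simp only: av_mult) (rule mult_right_le_one_le, auto)
  qed
  finally show ?thesis .
qed

definition cq where "cq = av (Q0 - 1) / av (q - 1)"

lemma cq_pos: "0 < cq" unfolding cq_def using Q0_pos av_qm1_pos by simp

lemma q_int_lower: "j > 0 \<Longrightarrow> cq * av (of_nat j :: 'a) \<le> av (q_int q j)"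
proof -
  assume j: "j > 0"
  have "av (q_int q j) = av (q ^ j - 1) / av (q - 1)" unfolding q_int_def by simp
  moreover have "cq * av (of_nat j :: 'a) = av (of_nat j :: 'a) * av (Q0 - 1) / av (q - 1)"
    unfolding cq_def by simp
  ultimately show ?thesis using qpow_lower[OF j] av_qm1_pos by (simp add: divide_right_mono)
qed

lemma q_fact_lower: "(cq * av (of_nat p :: 'a)) ^ n \<le> av (q_fact q n)"
proof -
  have "(cq * av (of_nat p :: 'a)) ^ n = cq ^ n * av (of_nat p :: 'a) ^ n" by (simp add: power_mult_distrib)
  also have "\<dots> \<le> cq ^ n * (\<Prod>j=1..n. av (of_nat j :: 'a))"
    using prod_av_lower cq_pos by (intro mult_left_mono) auto
  also have "\<dots> = (\<Prod>j=1..n. cq * av (of_nat j :: 'a))" by (simp add: prod.distrib)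
  also have "\<dots> \<le> (\<Prod>j=1..n. av (q_int q j))"
    by (rule prod_mono) (use q_int_lower cq_pos in auto)
  also have "\<dots> = av (q_fact q n)" unfolding q_fact_def by (simp add: av_prod)
  finally show ?thesis .
qed

lemma q_fact_p_lt1: "av (q_fact q p) < 1"
proof -
  have "av (q_int q p) < 1"
  proof -
    have "q_int q p = (\<Sum>k<p. q ^ k)" unfolding q_int_eq by (rule qint_nat)
    also have "\<dots> = of_nat p + (\<Sum>k<p. q ^ k - 1)" by (simp add: sum_subtractf)
    finally have e: "q_int q p = of_nat p + (\<Sum>k<p. q ^ k - 1)" .
    have "av (\<Sum>k<p. q ^ k - 1) \<le> av (q - 1)" by (rule av_sum_le) (auto intro: pow_sub1_bound[OF q1])
    then have "av (\<Sum>k<p. q ^ k - 1) < 1" using q1 by linarith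
    then show ?thesis unfolding e using avp by (intro le_less_trans[OF av_add]) simp
  qed
  have "q_fact q p = q_fact q (p - 1) * q_int q p" using p_ge2 q_fact_Suc[of "p - 1"] by simp
  then have "av (q_fact q p) = av (q_fact q (p - 1)) * av (q_int q p)" by simp
  also have "\<dots> \<le> 1 * av (q_int q p)" using av_q_fact_le1 by (intro mult_right_mono) auto
  finally show ?thesis using \<open>av (q_int q p) < 1\<close> by simp
qed

end


lemma fekete_iter:
  fixes x :: "nat \<Rightarrow> real"
  assumes sub: "\<And>m j. x (m + j) \<le> x m + x j"
  shows "x (a * m + r) \<le> real a * x m + x r"
proof (induction a)
  case (Suc a)
  have "x (Suc a * m + r) = x (m + (a * m + r))" by (simp add: algebra_simps)
  also have "\<dots> \<le> x m + x (a * m + r)" by (rule sub)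
  also have "\<dots> \<le> x m + (real a * x m + x r)" using Suc by simp
  finally show ?case by (simp add: algebra_simps)
qed simp

lemma fekete:
  fixes x :: "nat \<Rightarrow> real" and B :: real
  assumes sub: "\<And>m j. x (m + j) \<le> x m + x j"
    and le0: "\<And>n. x n \<le> 0"
    and low: "\<And>n. - B * real n \<le> x n"
  shows "(\<lambda>n. x n / real n) \<longlonglongrightarrow> Inf ((\<lambda>n. x n / real n) ` {1..})"
proof -
  define S where "S = (\<lambda>n. x n / real n) ` {1..}"
  define L where "L = Inf S"
  have B0: "0 \<le> B" using low[of 1] le0[of 1] by simp
  have lowd: "- B \<le> x n / real n" if "n \<ge> 1" for n
  proof -
    have "- B * real n \<le> x n" by (rule low)
    then show ?thesis using that by (simp add: field_simps)
  qed
  have bdd: "bdd_below S" unfolding S_def using lowd by (intro bdd_belowI[of _ "- B"]) auto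
  have ne: "S \<noteq> {}" unfolding S_def by auto
  have Lle: "L \<le> x n / real n" if "n \<ge> 1" for n
    unfolding L_def S_def using bdd unfolding S_def by (intro cInf_lower) (use that in auto)
  have "(\<lambda>n. x n / real n) \<longlonglongrightarrow> L"
  proof (rule LIMSEQ_I)
    fix eps :: real assume eps: "eps > 0"
    have "Inf S < L + eps / 2" using eps unfolding L_def by simp
    then obtain s where "s \<in> S" "s < L + eps / 2" using cInf_less_iff[OF ne bdd] by blast
    then obtain m where m: "m \<ge> 1" "x m / real m < L + eps / 2" unfolding S_def by auto
    define y where "y = x m / real m"
    have y0: "y \<le> 0" unfolding y_def using le0[of m] by (simp add: divide_nonpos_nonneg)
    have yB: "- B \<le> y" unfolding y_def using lowd[OF m(1)] .
    define N where "N = m + nat \<lceil>2 * real m * B / eps\<rceil> + 1"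
    show "\<exists>no. \<forall>n\<ge>no. norm (x n / real n - L) < eps"
    proof (intro exI[of _ N] allI impI)
      fix n assume nN: "N \<le> n"
      have n1: "n \<ge> 1" "n \<ge> m" using nN unfolding N_def by auto
      have npos: "0 < real n" using n1 by simp
      define a where "a = n div m"
      define rr where "rr = n mod m"
      have ndec: "n = a * m + rr" unfolding a_def rr_def by simp
      have rrm: "rr < m" unfolding rr_def using m(1) by simp
      have "x n \<le> real a * x m + x rr" unfolding ndec by (rule fekete_iter[OF sub])
      also have "\<dots> \<le> real a * x m" using le0[of rr] by simp
      also have "real a * x m = real (a * m) * y" unfolding y_def using m(1) by simp
      also have "\<dots> \<le> (real n - real m) * y"
      proof (rule mult_right_mono_neg[OF _ y0])
        have "real n = real (a * m) + real rr" using ndec by (metis of_nat_add)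
        then show "real n - real m \<le> real (a * m)" using rrm by simp
      qed
      finally have xn: "x n \<le> (real n - real m) * y" .
      have "x n / real n \<le> (real n - real m) * y / real n" using xn npos by (simp add: divide_right_mono)
      also have "\<dots> = y + real m * (- y) / real n" using npos by (simp add: field_simps)
      also have "\<dots> \<le> y + real m * B / real n"
        using yB npos by (intro add_left_mono divide_right_mono mult_left_mono) auto
      also have "real m * B / real n \<le> eps / 2"
      proof -
        have "2 * real m * B / eps \<le> real (nat \<lceil>2 * real m * B / eps\<rceil>)" by linarith
        also have "\<dots> \<le> real n"
        proof -
          have "nat \<lceil>2 * real m * B / eps\<rceil> \<le> n" using nN unfolding N_def by linarith
          then show ?thesis by (rule of_nat_mono)
        qed
        finally have "2 * real m * B / eps \<le> real n" .
        then have "2 * real m * B \<le> real n * eps" using eps by (simp add: divide_le_eq)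
        then show ?thesis using npos eps by (simp add: divide_le_eq field_simps)
      qed
      finally have up: "x n / real n \<le> y + eps / 2" by simp
      have "x n / real n < L + eps" using up m(2) unfolding y_def by linarith
      moreover have "L \<le> x n / real n" using Lle[OF n1(1)] .
      ultimately show "norm (x n / real n - L) < eps" using eps by simp
    qed
  qed
  then show ?thesis unfolding L_def S_def .
qed

context QLP
begin

definition xs where "xs n = ln (av (q_fact q n))"
definition Lq where "Lq = Inf ((\<lambda>n. xs n / real n) ` {1..})"

lemma xs_sub: "xs (m + j) \<le> xs m + xs j"
proof -
  have "ln (av (q_fact q (m + j))) \<le> ln (av (q_fact q m) * av (q_fact q j))"
    using q_fact_submult av_q_fact_pos by (intro ln_mono) (auto intro: mult_pos_pos)
  then show ?thesis unfolding xs_def using av_q_fact_pos by (simp add: ln_mult q_fact_ne0)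
qed

lemma xs_le0: "xs n \<le> 0" unfolding xs_def using av_q_fact_le1 av_q_fact_pos by simp

lemma cqp_pos: "0 < cq * av (of_nat p :: 'a)" using cq_pos avp_pos by simp

lemma xs_low: "- (- ln (cq * av (of_nat p :: 'a))) * real n \<le> xs n"
proof -
  have "ln ((cq * av (of_nat p :: 'a)) ^ n) \<le> xs n"
    unfolding xs_def using q_fact_lower cqp_pos av_q_fact_pos by (intro ln_mono) auto
  then show ?thesis using cqp_pos by (simp add: ln_realpow mult.commute)
qed

lemma xs_lim: "(\<lambda>n. xs n / real n) \<longlonglongrightarrow> Lq"
  unfolding Lq_def by (rule fekete[OF xs_sub xs_le0 xs_low])

lemma qf_lim: "(\<lambda>n. av (q_fact q n) powr (1 / real n)) \<longlonglongrightarrow> exp Lq"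
proof -
  have "(\<lambda>n. exp (xs n / real n)) \<longlonglongrightarrow> exp Lq" by (intro tendsto_exp xs_lim)
  moreover have "\<forall>\<^sub>F n in sequentially. exp (xs n / real n) = av (q_fact q n) powr (1 / real n)"
    unfolding xs_def using av_q_fact_pos by (intro always_eventually allI) (simp add: powr_def q_fact_ne0)
  ultimately show ?thesis by (rule Lim_transform_eventually)
qed

lemma omega_eq: "omega_q av q = exp Lq"
  unfolding omega_q_def using qf_lim by (rule limI)

lemma omega_lim: "(\<lambda>n. av (q_fact q n) powr (1 / real n)) \<longlonglongrightarrow> omega_q av q"
  using qf_lim omega_eq by simp

lemma omega_pos: "0 < omega_q av q" unfolding omega_eq by simp

lemma omega_lt1: "omega_q av q < 1"
proof -
  have "Lq \<le> xs p / real p"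
  proof -
    have "bdd_below ((\<lambda>n. xs n / real n) ` {1..})"
    proof (rule bdd_belowI)
      fix s assume "s \<in> (\<lambda>n. xs n / real n) ` {1..}"
      then obtain n where n: "n \<ge> 1" "s = xs n / real n" by auto
      have "- (- ln (cq * av (of_nat p :: 'a))) * real n \<le> xs n" by (rule xs_low)
      then have "ln (cq * av (of_nat p :: 'a)) * real n \<le> xs n" by simp
      then have "ln (cq * av (of_nat p :: 'a)) \<le> xs n / real n" using n(1) by (simp add: le_divide_eq)
      then show "ln (cq * av (of_nat p :: 'a)) \<le> s" using n(2) by simp
    qed
    then show ?thesis unfolding Lq_def using p_ge2 by (intro cInf_lower) auto
  qed
  also have "xs p / real p < 0"
    unfolding xs_def using q_fact_p_lt1 av_q_fact_pos[of p] p_ge2 by (simp add: divide_neg_pos)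
  finally show ?thesis unfolding omega_eq by simp
qed

end


locale QLGP = QLG + QLP
begin

abbreviation om where "om \<equiv> omega_q av q"
abbreviation af where "af n \<equiv> av (q_fact q n)"

lemma powr_pow_inv: "0 < x \<Longrightarrow> 0 < j \<Longrightarrow> (x powr (1 / real j)) ^ j = x"
proof -
  assume x: "0 < x" and j: "0 < j"
  have "(x powr (1 / real j)) ^ j = (x powr (1 / real j)) powr (real j)"
    using x by (simp add: powr_realpow)
  also have "\<dots> = x" using j x by (simp add: powr_powr)
  finally show ?thesis .
qed

lemma qf_ev:
  assumes "om < th"
  shows "\<exists>J\<ge>1. \<forall>j\<ge>J. af j \<le> th ^ j"
proof -
  have "\<forall>\<^sub>F j in sequentially. af j powr (1 / real j) < th"
    using order_tendstoD(2)[OF omega_lim assms] .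
  then obtain J0 where J0: "\<And>j. j \<ge> J0 \<Longrightarrow> af j powr (1 / real j) < th"
    unfolding eventually_sequentially by blast
  show ?thesis
  proof (intro exI[of _ "max J0 1"] conjI allI impI)
    fix j assume j: "max J0 1 \<le> j"
    then have jpos: "0 < j" by simp
    have "af j = (af j powr (1 / real j)) ^ j" using powr_pow_inv[OF av_q_fact_pos jpos] by simp
    also have "\<dots> \<le> th ^ j" using J0[of j] j by (intro power_mono) auto
    finally show "af j \<le> th ^ j" .
  qed simp
qed

lemma decay:
  assumes s0: "s0 \<ge> 1" "gn (gb s0) < 1"
  shows "\<exists>\<rho> C. 0 < \<rho> \<and> \<rho> < 1 \<and> 0 < C \<and> (\<forall>n. gn (gb n) \<le> C * \<rho> ^ n)"
proof -
  define c where "c = gn (gb s0)"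
  have c0: "0 \<le> c" "c < 1" unfolding c_def using gn_nonneg[OF EK_gb] s0 by auto
  define th where "th = (om + 1) / 2"
  have th: "om < th" "th < 1" "0 < th" unfolding th_def using omega_lt1 omega_pos by auto
  obtain J where J: "J \<ge> 1" "\<And>j. j \<ge> J \<Longrightarrow> af j \<le> th ^ j" using qf_ev[OF th(1)] by blast
  define N where "N = s0 + J"
  have Npos: "0 < N" unfolding N_def using J by simp
  define \<rho> where "\<rho> = max th (c powr (1 / real N))"
  have r0: "0 < \<rho>" unfolding \<rho>_def using th by simp
  have cpow: "c powr (1 / real N) < 1"
  proof -
    have "c powr (1 / real N) < 1 powr (1 / real N)" using c0 Npos by (intro powr_less_mono2) auto
    then show ?thesis by simp
  qed
  have r1: "\<rho> < 1" unfolding \<rho>_def using th cpow by simp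
  have cN: "c \<le> \<rho> ^ N"
  proof (cases "c = 0")
    case True then show ?thesis using r0 by simp
  next
    case False
    then have "c = (c powr (1 / real N)) ^ N" using powr_pow_inv[of c N] c0 Npos by simp
    also have "\<dots> \<le> \<rho> ^ N" unfolding \<rho>_def by (intro power_mono) auto
    finally show ?thesis .
  qed
  have key: "af j * c \<le> \<rho> ^ (s0 + j)" for j
  proof (cases "j \<ge> J")
    case True
    have "af j \<le> \<rho> ^ j"
    proof -
      have "af j \<le> th ^ j" using J(2)[OF True] .
      also have "\<dots> \<le> \<rho> ^ j" unfolding \<rho>_def using th by (intro power_mono) auto
      finally show ?thesis .
    qed
    moreover have "c \<le> \<rho> ^ s0"
    proof -
      have "\<rho> ^ N \<le> \<rho> ^ s0" using r0 r1 unfolding N_def by (intro power_decreasing) auto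
      then show ?thesis using cN by simp
    qed
    ultimately have "af j * c \<le> \<rho> ^ j * \<rho> ^ s0" using c0 r0 by (intro mult_mono) auto
    then show ?thesis by (simp add: power_add mult.commute)
  next
    case False
    have "af j * c \<le> 1 * c" using av_q_fact_le1 c0 by (intro mult_right_mono) auto
    also have "\<dots> \<le> \<rho> ^ N" using cN by simp
    also have "\<dots> \<le> \<rho> ^ (s0 + j)" using r0 r1 False unfolding N_def by (intro power_decreasing) auto
    finally show ?thesis .
  qed
  define C where "C = 1 / \<rho> ^ s0"
  have C0: "0 < C" unfolding C_def using r0 by simp
  have main: "gn (gb n) \<le> C * \<rho> ^ n" for n
  proof (induction n rule: less_induct)
    case (less n)
    show ?case
    proof (cases "n < s0")
      case True
      have "\<rho> ^ s0 \<le> \<rho> ^ n" using r0 r1 True by (intro power_decreasing) auto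
      then have "1 \<le> C * \<rho> ^ n" unfolding C_def using r0 by (simp add: field_simps)
      then show ?thesis using gn_gb[of n] by linarith
    next
      case False
      define t where "t = n - s0"
      have nt: "n = s0 + t" unfolding t_def using False by simp
      have "gb n = (Dop ^^ t) (gb s0)" unfolding nt by (rule gb_add)
      moreover have "gn ((Dop ^^ t) (gb s0)) \<le> C * \<rho> ^ n"
      proof (rule gn_Dop_pow[OF EK_gb])
        show "0 \<le> C * \<rho> ^ n" using C0 r0 by simp
      next
        fix k assume k: "k \<le> t"
        have kn: "k < n" using k nt s0 by simp
        have "af (t - k) * gn (gb s0) * gn (gb k) \<le> \<rho> ^ (s0 + (t - k)) * (C * \<rho> ^ k)"
          using key[of "t - k"] less(1)[OF kn] gn_nonneg[OF EK_gb] r0 unfolding c_def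
          by (intro mult_mono) (auto intro: mult_nonneg_nonneg)
        also have "\<dots> = C * \<rho> ^ n" using k nt by (simp add: power_add[symmetric] algebra_simps)
        finally show "af (t - k) * gn (gb s0) * gn (gb k) \<le> C * \<rho> ^ n" .
      qed
      ultimately show ?thesis by simp
    qed
  qed
  show ?thesis using r0 r1 C0 main by blast
qed

definition Tseq where
  "Tseq s = (if gn (gb s) = 0 then \<infinity> else ereal ((gn (gb s) / af s) powr (- 1 / real s)))"

lemma Ray_eq: "Ray av q g = min 1 (liminf Tseq)"
  unfolding Ray_def Tseq_def ..

lemma dir1:
  assumes "s0 \<ge> 1" "gn (gb s0) < 1"
  shows "ereal om < Ray av q g"
proof -
  obtain \<rho> C where rc: "0 < \<rho>" "\<rho> < 1" "0 < C" "\<And>n. gn (gb n) \<le> C * \<rho> ^ n"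
    using decay[OF assms] by blast
  define b where "b s = af s powr (1 / real s) / (C powr (1 / real s) * \<rho>)" for s
  have blim: "b \<longlonglongrightarrow> om / (1 * \<rho>)"
  proof -
    have "(\<lambda>s. C powr (1 / real s)) \<longlonglongrightarrow> C powr 0"
      using rc(3) by (intro tendsto_powr tendsto_const lim_const_over_n) auto
    then have "(\<lambda>s. C powr (1 / real s)) \<longlonglongrightarrow> 1" using rc(3) by simp
    then show ?thesis unfolding b_def using rc(1)
      by (intro tendsto_divide omega_lim tendsto_mult tendsto_const) auto
  qed
  have bT: "ereal (b s) \<le> Tseq s" if s: "s \<ge> 1" for s
  proof (cases "gn (gb s) = 0")
    case True then show ?thesis unfolding Tseq_def by simp
  next
    case False
    define a where "a = gn (gb s)"
    have a0: "0 < a" unfolding a_def using False gn_nonneg[OF EK_gb, of s] by simp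
    have f0: "0 < af s" by (rule av_q_fact_pos)
    have m1: "- 1 / real s = - (1 / real s)" by simp
    have "(a / af s) powr (- 1 / real s) = inverse ((a / af s) powr (1 / real s))"
      unfolding m1 by (rule powr_minus)
    also have "\<dots> = inverse (a powr (1 / real s) / af s powr (1 / real s))"
      by (simp only: powr_divide)
    also have "\<dots> = af s powr (1 / real s) / a powr (1 / real s)" by simp
    finally have "(a / af s) powr (- 1 / real s) = af s powr (1 / real s) / a powr (1 / real s)" .
    moreover have "a powr (1 / real s) \<le> C powr (1 / real s) * \<rho>"
    proof -
      have "a powr (1 / real s) \<le> (C * \<rho> ^ s) powr (1 / real s)"
        using rc(4)[of s] a0 unfolding a_def by (intro powr_mono2) auto
      also have "\<dots> = C powr (1 / real s) * (\<rho> ^ s) powr (1 / real s)" by (rule powr_mult)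
      also have "(\<rho> ^ s) powr (1 / real s) = \<rho>"
        using rc(1) s by (simp add: powr_realpow[symmetric] powr_powr)
      finally show ?thesis .
    qed
    ultimately have "b s \<le> (a / af s) powr (- 1 / real s)"
      unfolding b_def using a0 f0 rc by (auto intro!: divide_left_mono mult_pos_pos)
    then show ?thesis unfolding Tseq_def a_def using False by simp
  qed
  have "liminf (\<lambda>s. ereal (b s)) \<le> liminf Tseq"
    by (rule Liminf_mono) (use bT in \<open>auto simp: eventually_sequentially\<close>)
  moreover have "liminf (\<lambda>s. ereal (b s)) = ereal (om / \<rho>)"
    using lim_imp_Liminf[OF trivial_limit_sequentially tendsto_ereal[OF blim]] by simp
  ultimately have L: "ereal (om / \<rho>) \<le> liminf Tseq" by simp
  have "om < om / \<rho>" using omega_pos rc(1,2) by (simp add: field_simps)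
  then have "ereal om < ereal (om / \<rho>)" by simp
  then have "ereal om < liminf Tseq" using L by (rule less_le_trans)
  moreover have "ereal om < 1" using omega_lt1 by simp
  ultimately show ?thesis unfolding Ray_eq by simp
qed

lemma dir2:
  assumes "ereal om < Ray av q g"
  shows "\<exists>s\<ge>1. gn (gb s) < 1"
proof (rule ccontr)
  assume "\<not> (\<exists>s\<ge>1. gn (gb s) < 1)"
  then have one: "gn (gb s) = 1" if "s \<ge> 1" for s using gn_gb[of s] that by force
  have "\<forall>\<^sub>F s in sequentially. Tseq s = ereal (af s powr (1 / real s))"
    unfolding eventually_sequentially
  proof (intro exI[of _ 1] allI impI)
    fix s :: nat assume s: "s \<ge> 1"
    have f0: "0 < af s" by (rule av_q_fact_pos)
    have "(1 / af s) powr (- 1 / real s) = af s powr (1 / real s)"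
      using f0 less_imp_le[OF f0] by (simp add: powr_divide minus_divide_left powr_minus divide_inverse inverse_powr)
    then show "Tseq s = ereal (af s powr (1 / real s))" unfolding Tseq_def using one[OF s] by simp
  qed
  then have "liminf Tseq = liminf (\<lambda>s. ereal (af s powr (1 / real s)))" by (rule Liminf_eq)
  also have "\<dots> = ereal om"
    by (rule lim_imp_Liminf[OF trivial_limit_sequentially tendsto_ereal[OF omega_lim]])
  finally have "Ray av q g \<le> ereal om" unfolding Ray_eq by simp
  then show False using assms by simp
qed

end


theorem lemma5p3p5:
  fixes av :: "'a::field_char_0 \<Rightarrow> real" and p :: nat and q :: 'a and g :: "int \<Rightarrow> 'a"
  assumes K: "cdvf av p"
    and q1: "av (q - 1) < 1"
    and qnroot: "\<forall>n>0. q ^ n \<noteq> 1"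
    and gE: "in_EK av g"
    and gnorm: "gauss_norm av g \<le> 1"
  shows "ereal (omega_q av q) < Ray av q g \<longleftrightarrow> (\<exists>s\<ge>1. gauss_norm av (g_br av q g s) < 1)"
proof -
  interpret QLGP av q g p
    by unfold_locales (use K q1 qnroot gE gnorm in \<open>auto simp: cdvf_def\<close>)
  show ?thesis using dir1 dir2 by blast
qed

end
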